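(* Let $X$ and $U$ be Hilbert spaces, let $A$ generate an analytic semigroup $\{S(t);t\geq0\}$ on $X$, with $D(A)$ endowed with the graph norm, and let $B\in\mathcal L(D(A),U)$ satisfy: for each $\tau>0$ there is $C(\tau)>0$ with $\int_0^\tau\|BS(t)u_0\|_U^2\,dt\leq C(\tau)\|u_0\|_X^2$ for all $u_0\in D(A)$; and there are positive constants $d,k$ such that for all $L\in(0,1]$ and $u_0\in D(A)$, $\|S(L)u_0\|_X^2\leq e^{d/L^k}\int_0^L\|BS(t)u_0\|_U^2\,dt$. Let $\rho\in(0,1)$ be the constant (depending only on the semigroup) such that, with some $K\geq1$, for every $u_0\in D(A)$ the function $g(t)=\|BS(t)u_0\|_U^2$ satisfies $|g^{(\beta)}(t)|\leq K(t-s)^{-2}\beta!(\rho(t-s))^{-\beta}\|S(s)u_0\|_X^2$ for all $\beta\in\mathbb N$ whenever $0<t-s\leq1$. Let $0\leq t_1<t_2$ with $t_2-t_1\leq1$, let $\eta\in(0,1)$, and let $E\subset[t_1,t_2]$ be a measurable set of positive measure with $|E\cap(t_1,t_2)|\geq\eta(t_2-t_1)$. Then there are constants $C=C(d,k,\rho,\eta,\|B\|_{\mathcal L(D(A),U)})>0$ and $\theta=\theta(\rho,\eta)\in(0,1)$ such that for every $u_0\in D(A)$, $u(t)=S(t)u_0$ satisfies $$\|u(t_2)\|_X\leq\Big(Ce^{\frac{C}{(t_2-t_1)^k}}\int_{t_1}^{t_2}\chi_E(t)\|Bu(t)\|_U\,dt\Big)^\theta\|u(t_1)\|_X^{1-\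theta}.$$
   Context: $\chi_E$ is the characteristic function of $E$ and $|E|$ its Lebesgue measure. Constants are independent of $u_0$, $t_1$, $t_2$ and $E$ beyond the listed dependence (and the fixed semigroup). *)

theory Defs
  imports "HOL-Analysis.Analysis"
begin

definition C0_semigroup :: "(real \<Rightarrow> 'a::real_normed_vector \<Rightarrow> 'a) \<Rightarrow> bool" where
  "C0_semigroup S \<longleftrightarrow>
     (\<forall>t\<ge>0. bounded_linear (S t)) \<and>
     S 0 = id \<and>
     (\<forall>t s. 0 \<le> t \<longrightarrow> 0 \<le> s \<longrightarrow> S (t + s) = S t \<circ> S s) \<and>
     (\<forall>x. continuous_on {0..} (\<lambda>t. S t x))"

definition gen_dom :: "(real \<Rightarrow> 'a::real_normed_vector \<Rightarrow> 'a) \<Rightarrow> 'a set" where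
  "gen_dom S = {x. \<exists>y. ((\<lambda>h. (S h x - x) /\<^sub>R h) \<longlongrightarrow> y) (at_right 0)}"

text \<open>The infinitesimal generator A (meaningful on gen_dom S).\<close>
definition gen :: "(real \<Rightarrow> 'a::real_normed_vector \<Rightarrow> 'a) \<Rightarrow> 'a \<Rightarrow> 'a" where
  "gen S x = Lim (at_right 0) (\<lambda>h. (S h x - x) /\<^sub>R h)"

text \<open>Analytic semigroup (real setting; Pazy, Thm 2.5.2(d)):
  a C0 semigroup with S(t) X \<subseteq> D(A) for t > 0 and \<parallel>A S(t)\<parallel> \<le> M/t for 0 < t \<le> 1.\<close>
definition analytic_semigroup :: "(real \<Rightarrow> 'a::real_normed_vector \<Rightarrow> 'a) \<Rightarrow> bool" where
  "analytic_semigroup S \<longleftrightarrow> C0_semigroup S \<and>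
     (\<forall>t>0. \<forall>x. S t x \<in> gen_dom S) \<and>
     (\<exists>M. \<forall>t\<in>{0<..1}. \<forall>x. norm (gen S (S t x)) \<le> M / t * norm x)"

definition bounded_on_graph ::
    "(real \<Rightarrow> 'a::real_normed_vector \<Rightarrow> 'a) \<Rightarrow> ('a \<Rightarrow> 'b::real_normed_vector) \<Rightarrow> bool" where
  "bounded_on_graph S B \<longleftrightarrow>
     (\<forall>x\<in>gen_dom S. \<forall>y\<in>gen_dom S. B (x + y) = B x + B y) \<and>
     (\<forall>x\<in>gen_dom S. \<forall>c. B (c *\<^sub>R x) = c *\<^sub>R B x) \<and>
     (\<exists>c\<ge>0. \<forall>x\<in>gen_dom S. norm (B x) \<le> c * norm (x, gen S x))"

end

theory Submission
  imports Defs "HOL-Computational_Algebra.Polynomial"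
begin



lemma pow_div_fact_le_exp:
  fixes x :: real assumes "0 \<le> x"
  shows "x ^ n / fact n \<le> exp x"
proof -
  have "(\<Sum>m\<in>{n}. inverse (fact m) * x^m) \<le> (\<Sum>m. inverse (fact m) * x^m)"
    by (rule sum_le_suminf[OF summable_exp]) (use assms in auto)
  thus ?thesis by (simp add: exp_def field_simps)
qed

lemma lagrange_identity:
  fixes x c :: "nat \<Rightarrow> real"
  assumes inj: "inj_on x {..<n}"
  shows "(\<Sum>m<n. c m * (t - a)^m) =
    (\<Sum>i<n. (\<Sum>m<n. c m * (x i - a)^m) * (\<Prod>j\<in>{..<n}-{i}. (t - x j) / (x i - x j)))"
proof (cases n)
  case 0 thus ?thesis by simp
next
  case (Suc n')
  define P where "P s = (\<Sum>m<n. c m * (s - a)^m)" for s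
  define p where "p = (\<Sum>m<n. smult (c m) ([:-a,1:]^m))"
  define q where "q = (\<Sum>i<n. smult (P (x i) / (\<Prod>j\<in>{..<n}-{i}. (x i - x j))) (\<Prod>j\<in>{..<n}-{i}. [:- x j, 1:]))"
  have pp: "poly p s = P s" for s by (simp add: p_def P_def poly_sum)
  have pq: "poly q s = (\<Sum>i<n. P (x i) * (\<Prod>j\<in>{..<n}-{i}. (s - x j) / (x i - x j)))" for s
    by (simp add: q_def poly_sum poly_prod prod_dividef)
  have dp: "degree p \<le> n'"
    unfolding p_def
  proof (rule degree_sum_le)
    fix m assume "m \<in> {..<n}"
    hence "m \<le> n'" using Suc by auto
    moreover have "degree (smult (c m) ([:-a,1:]^m)) \<le> m"
      by (metis degree_linear_power degree_smult_le order.trans)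
    ultimately show "degree (smult (c m) ([:-a,1:]^m)) \<le> n'" by linarith
  qed simp
  have dq: "degree q \<le> n'"
    unfolding q_def
  proof (rule degree_sum_le)
    fix i assume i: "i \<in> {..<n}"
    have "degree (\<Prod>j\<in>{..<n}-{i}. [:- x j, 1:]) \<le> (\<Sum>j\<in>{..<n}-{i}. degree [:- x j, 1:])"
      using degree_prod_sum_le[of "{..<n}-{i}" "\<lambda>j. [:- x j, 1:]"] by (simp add: o_def)
    also have "\<dots> = card ({..<n}-{i})" by simp
    also have "\<dots> = n'" using i Suc by simp
    finally show "degree (smult (P (x i) / (\<Prod>j\<in>{..<n}-{i}. (x i - x j))) (\<Prod>j\<in>{..<n}-{i}. [:- x j, 1:])) \<le> n'"
      using degree_smult_le order.trans by blast
  qed simp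
  have agree: "poly p s = poly q s" if s: "s \<in> x ` {..<n}" for s
  proof -
    obtain k where k: "k < n" "s = x k" using s by auto
    have "poly q s = P (x k) * (\<Prod>j\<in>{..<n}-{k}. (x k - x j) / (x k - x j))
        + (\<Sum>i\<in>{..<n}-{k}. P (x i) * (\<Prod>j\<in>{..<n}-{i}. (x k - x j) / (x i - x j)))"
      unfolding pq k(2) using k(1) by (subst sum.remove[of _ k]) auto
    also have "(\<Sum>i\<in>{..<n}-{k}. P (x i) * (\<Prod>j\<in>{..<n}-{i}. (x k - x j) / (x i - x j))) = 0"
    proof (rule sum.neutral, rule ballI)
      fix i assume i: "i \<in> {..<n}-{k}"
      have "(\<Prod>j\<in>{..<n}-{i}. (x k - x j) / (x i - x j)) = 0"
        using i k(1) by (intro prod_zero) auto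
      thus "P (x i) * (\<Prod>j\<in>{..<n}-{i}. (x k - x j) / (x i - x j)) = 0" by simp
    qed
    also have "(\<Prod>j\<in>{..<n}-{k}. (x k - x j) / (x k - x j)) = 1"
    proof (rule prod.neutral, rule ballI)
      fix j assume j: "j \<in> {..<n}-{k}"
      hence "x k \<noteq> x j" using inj k(1) by (auto dest: inj_onD)
      thus "(x k - x j) / (x k - x j) = 1" by simp
    qed
    finally show ?thesis using pp k by simp
  qed
  have "p = q"
  proof (rule poly_eqI_degree[OF agree])
    have "card (x ` {..<n}) = n" using inj by (simp add: card_image)
    thus "degree p < card (x ` {..<n})" "degree q < card (x ` {..<n})" using dp dq Suc by auto
  qed auto
  hence "poly p t = poly q t" by simp
  thus ?thesis using pp pq P_def by simp
qed



lemma prod_lessThan_diff_fact: "(\<Prod>j<i. real (i - j)) = fact i"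
proof (induction i)
  case (Suc i)
  have "(\<Prod>j<Suc i. real (Suc i - j)) = real (Suc i) * (\<Prod>j<i. real (Suc i - Suc j))"
    by (subst prod.lessThan_Suc_shift) simp
  also have "\<dots> = fact (Suc i)" using Suc by simp
  finally show ?case .
qed simp

lemma prod_dist_fact:
  assumes "i < n"
  shows "(\<Prod>j\<in>{..<n}-{i}. \<bar>real i - real j\<bar>) = fact i * fact (n - 1 - i)"
proof -
  define m where "m = n - i - 1"
  have n: "n = i + 1 + m" using assms by (simp add: m_def)
  have "(\<Prod>j\<in>{..<i+1+m}-{i}. \<bar>real i - real j\<bar>) = fact i * fact m"
  proof (induction m)
    case 0
    have "{..<i+1+0}-{i} = {..<i}" by auto
    hence "(\<Prod>j\<in>{..<i+1+0}-{i}. \<bar>real i - real j\<bar>) = (\<Prod>j<i. real (i - j))"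
      by (auto intro!: prod.cong simp: of_nat_diff)
    thus ?case by (simp only: prod_lessThan_diff_fact fact_0 of_nat_1 mult_1_right)
  next
    case (Suc m)
    have "{..<i+1+Suc m}-{i} = insert (i+1+m) ({..<i+1+m}-{i})" by auto
    hence "(\<Prod>j\<in>{..<i+1+Suc m}-{i}. \<bar>real i - real j\<bar>)
        = \<bar>real i - real (i+1+m)\<bar> * (\<Prod>j\<in>{..<i+1+m}-{i}. \<bar>real i - real j\<bar>)"
      by simp
    also have "\<dots> = fact i * fact (Suc m)" using Suc by (simp add: algebra_simps)
    finally show ?case .
  qed
  thus ?thesis using n by simp
qed

lemma row_sum_real: "(\<Sum>i\<le>m. real (m choose i)) = 2^m"
proof -
  have "real (\<Sum>i\<le>m. m choose i) = real ((2::nat)^m)" by (simp only: choose_row_sum)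
  thus ?thesis by simp
qed

lemma lagrange_basis_bound:
  fixes x :: "nat \<Rightarrow> real"
  assumes sep: "\<And>i j. i < j \<Longrightarrow> j < n \<Longrightarrow> x j - x i \<ge> real (j - i) * \<delta>"
    and dpos: "\<delta> > 0"
    and xin: "\<And>i. i < n \<Longrightarrow> x i \<in> {a..b}" and t: "t \<in> {a..b}" and n: "n \<ge> 1"
  shows "(\<Sum>i<n. \<bar>\<Prod>j\<in>{..<n}-{i}. (t - x j)/(x i - x j)\<bar>) \<le> ((b-a)/\<delta>)^(n-1) * 2^(n-1) / fact (n-1)"
proof -
  have ab: "a \<le> b" using t by auto
  have dist: "\<bar>x i - x j\<bar> \<ge> \<bar>real i - real j\<bar> * \<delta>" if "i < n" "j < n" for i j
  proof (cases i j rule: linorder_cases)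
    case less thus ?thesis using sep[of i j] that dpos by (simp add: of_nat_diff)
  next
    case greater thus ?thesis using sep[of j i] that dpos by (simp add: of_nat_diff)
  qed simp
  have each: "\<bar>\<Prod>j\<in>{..<n}-{i}. (t - x j)/(x i - x j)\<bar> \<le> (b-a)^(n-1) / (\<delta>^(n-1) * (fact i * fact (n - 1 - i)))"
    if i: "i < n" for i
  proof -
    have card: "card ({..<n}-{i}) = n - 1" using i by simp
    have num: "(\<Prod>j\<in>{..<n}-{i}. \<bar>t - x j\<bar>) \<le> (\<Prod>j\<in>{..<n}-{i}. (b - a))"
    proof (rule prod_mono)
      fix j assume "j \<in> {..<n}-{i}"
      hence "x j \<in> {a..b}" using xin by auto
      thus "0 \<le> \<bar>t - x j\<bar> \<and> \<bar>t - x j\<bar> \<le> b - a" using t by auto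
    qed
    have den: "(\<Prod>j\<in>{..<n}-{i}. \<bar>real i - real j\<bar> * \<delta>) \<le> (\<Prod>j\<in>{..<n}-{i}. \<bar>x i - x j\<bar>)"
      using dist i dpos by (intro prod_mono) auto
    have den': "(\<Prod>j\<in>{..<n}-{i}. \<bar>real i - real j\<bar> * \<delta>) = \<delta>^(n-1) * (fact i * fact (n - 1 - i))"
      by (simp add: prod.distrib prod_dist_fact[OF i] card mult.commute)
    have pos: "0 < \<delta>^(n-1) * (fact i * fact (n - 1 - i))" using dpos by simp
    have "\<bar>\<Prod>j\<in>{..<n}-{i}. (t - x j)/(x i - x j)\<bar> = (\<Prod>j\<in>{..<n}-{i}. \<bar>t - x j\<bar>) / (\<Prod>j\<in>{..<n}-{i}. \<bar>x i - x j\<bar>)"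
      by (simp add: abs_prod prod_dividef)
    also have "\<dots> \<le> (b-a)^(n-1) / (\<delta>^(n-1) * (fact i * fact (n - 1 - i)))"
    proof (rule frac_le)
      show "0 \<le> (b-a)^(n-1)" using ab by simp
      show "(\<Prod>j\<in>{..<n}-{i}. \<bar>t - x j\<bar>) \<le> (b-a)^(n-1)" using num card by simp
      show "0 < \<delta>^(n-1) * (fact i * fact (n - 1 - i))" by (rule pos)
      show "\<delta>^(n-1) * (fact i * fact (n - 1 - i)) \<le> (\<Prod>j\<in>{..<n}-{i}. \<bar>x i - x j\<bar>)"
        using den den' by simp
    qed
    finally show ?thesis .
  qed
  have "(\<Sum>i<n. \<bar>\<Prod>j\<in>{..<n}-{i}. (t - x j)/(x i - x j)\<bar>)
      \<le> (\<Sum>i<n. (b-a)^(n-1) / (\<delta>^(n-1) * (fact i * fact (n - 1 - i))))"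
    by (rule sum_mono) (use each in auto)
  also have "\<dots> = (\<Sum>i<n. ((b-a)/\<delta>)^(n-1) / fact (n-1) * real ((n-1) choose i))"
  proof (rule sum.cong[OF refl])
    fix i assume "i \<in> {..<n}"
    hence i: "i \<le> n - 1" using n by auto
    have e: "fact i * fact (n - 1 - i) * real ((n-1) choose i) = (fact (n-1) :: real)"
    proof -
      have "real (fact i * fact (n - 1 - i) * ((n-1) choose i)) = real (fact (n-1))"
        using binomial_fact_lemma[OF i] by simp
      thus ?thesis by simp
    qed
    have C: "real ((n-1) choose i) > 0" using i by simp
    have "((b-a)/\<delta>)^(n-1) / fact (n-1) * real ((n-1) choose i)
        = ((b-a)/\<delta>)^(n-1) / (fact i * fact (n - 1 - i) * real ((n-1) choose i)) * real ((n-1) choose i)"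
      by (simp only: e)
    also have "\<dots> = ((b-a)/\<delta>)^(n-1) / (fact i * fact (n - 1 - i))"
      using C by simp
    also have "\<dots> = (b-a)^(n-1) / (\<delta>^(n-1) * (fact i * fact (n - 1 - i)))"
      by (simp add: power_divide)
    finally show "(b-a)^(n-1) / (\<delta>^(n-1) * (fact i * fact (n - 1 - i))) = ((b-a)/\<delta>)^(n-1) / fact (n-1) * real ((n-1) choose i)"
      by simp
  qed
  also have "\<dots> = ((b-a)/\<delta>)^(n-1) / fact (n-1) * (\<Sum>i\<le>n-1. real ((n-1) choose i))"
    using n by (simp add: sum_distrib_left lessThan_Suc_atMost[symmetric])
  also have "(\<Sum>i\<le>n-1. real ((n-1) choose i)) = 2^(n-1)" by (rule row_sum_real)
  also have "((b-a)/\<delta>)^(n-1) / fact (n-1) * 2^(n-1) = ((b-a)/\<delta>)^(n-1) * 2^(n-1) / fact (n-1)"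
    by (rule times_divide_eq_left)
  finally show ?thesis .
qed



lemma lmeas_bdd: "F \<in> sets lebesgue \<Longrightarrow> F \<subseteq> {a..b::real} \<Longrightarrow> F \<inter> S \<in> sets lebesgue \<Longrightarrow> F \<inter> S \<in> lmeasurable"
  by (rule bounded_set_imp_lmeasurable) (auto intro: bounded_subset[OF bounded_closed_interval])

lemma cdf_split:
  fixes F :: "real set"
  assumes F: "F \<in> sets lebesgue" "F \<subseteq> {a..b}" and zy: "z \<le> y"
  shows "measure lebesgue (F \<inter> {a..y}) = measure lebesgue (F \<inter> {a..z}) + measure lebesgue (F \<inter> {z<..y})"
proof -
  have eq: "F \<inter> {a..y} = (F \<inter> {a..z}) \<union> (F \<inter> {z<..y})" using F zy by auto
  have m1: "F \<inter> {a..z} \<in> lmeasurable" using F by (intro lmeas_bdd) auto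
  have m2: "F \<inter> {z<..y} \<in> lmeasurable" using F by (intro lmeas_bdd) auto
  show ?thesis unfolding eq
    by (rule measure_Union) (use m1 m2 in \<open>auto simp: fmeasurable_def\<close>)
qed

lemma cdf_piece_le:
  fixes F :: "real set"
  assumes F: "F \<in> sets lebesgue" "F \<subseteq> {a..b}" and zy: "z \<le> y"
  shows "measure lebesgue (F \<inter> {z<..y}) \<le> y - z"
proof -
  have "measure lebesgue (F \<inter> {z<..y}) \<le> measure lebesgue {z<..y}"
    by (rule measure_mono_fmeasurable) (use F zy in \<open>auto simp: fmeasurable_def\<close>)
  also have "\<dots> = y - z" using zy by simp
  finally show ?thesis .
qed

lemma points_in_set:
  fixes F :: "real set"
  assumes F: "F \<in> sets lebesgue" "F \<subseteq> {a..b}" and m: "measure lebesgue F = m" "m > 0" and n: "n \<ge> 1"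
  shows "\<exists>x. (\<forall>i<n. x i \<in> F) \<and> (\<forall>i j. i < j \<longrightarrow> j < n \<longrightarrow> x j - x i \<ge> real (j - i) * (m / (2 * n)))"
proof -
  define c where "c y = measure lebesgue (F \<inter> {a..y})" for y
  have ab: "a \<le> b"
  proof (rule ccontr)
    assume "\<not> a \<le> b" hence "F = {}" using F by auto
    thus False using m by simp
  qed
  have split: "c y = c z + measure lebesgue (F \<inter> {z<..y})" if "z \<le> y" for y z
    unfolding c_def by (rule cdf_split[OF F that])
  have pos: "measure lebesgue (F \<inter> {z<..y}) \<ge> 0" for z y by simp
  have mono: "c z \<le> c y" if "z \<le> y" for y z using split[OF that] pos[of z y] by linarith
  have lip: "c y - c z \<le> y - z" if "z \<le> y" for y z using split[OF that] cdf_piece_le[OF F that] by linarith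
  have ca: "c a = 0"
  proof -
    have "F \<inter> {a..a} \<subseteq> {a}" by auto
    hence "measure lebesgue (F \<inter> {a..a}) \<le> measure lebesgue {a}"
      by (intro measure_mono_fmeasurable) (use F in \<open>auto simp: fmeasurable_def\<close>)
    hence "measure lebesgue (F \<inter> {a..a}) \<le> 0" by simp
    thus ?thesis unfolding c_def using measure_nonneg[of lebesgue "F \<inter> {a..a}"] by linarith
  qed
  have cb: "c b = m" unfolding c_def using F m by (simp add: Int_absorb2)
  have cont: "continuous_on {a..b} c"
  proof (rule lipschitz_on_continuous_on)
    show "1-lipschitz_on {a..b} c"
    proof (rule lipschitz_onI)
      fix x y :: real
      show "dist (c x) (c y) \<le> 1 * dist x y"
      proof (cases "x \<le> y")
        case True thus ?thesis using lip[OF True] mono[OF True] by (simp add: dist_real_def)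
      next
        case False hence "y \<le> x" by simp
        thus ?thesis using lip[of y x] mono[of y x] by (simp add: dist_real_def)
      qed
    qed simp
  qed
  have pick: "\<exists>x\<in>F. p \<le> c x \<and> c x \<le> q" if pq: "0 \<le> p" "p < q" "q \<le> m" for p q
  proof -
    obtain \<alpha> where \<alpha>: "a \<le> \<alpha>" "\<alpha> \<le> b" "c \<alpha> = p" using IVT'[of c a p b] ca cb pq ab cont by auto
    have cont': "continuous_on {\<alpha>..b} c" using continuous_on_subset[OF cont] \<alpha> by auto
    obtain \<beta> where \<beta>: "\<alpha> \<le> \<beta>" "\<beta> \<le> b" "c \<beta> = q" using IVT'[of c \<alpha> q b] \<alpha> cb pq \<alpha> cont' by auto
    have "measure lebesgue (F \<inter> {\<alpha><..\<beta>}) = q - p" using split[OF \<beta>(1)] \<alpha> \<beta> by simp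
    hence "F \<inter> {\<alpha><..\<beta>} \<noteq> {}" using pq by auto
    then obtain x where x: "x \<in> F" "\<alpha> < x" "x \<le> \<beta>" by auto
    have "p \<le> c x" using mono[of \<alpha> x] x \<alpha> by simp
    moreover have "c x \<le> q" using mono[of x \<beta>] x \<beta> by simp
    ultimately show ?thesis using x by blast
  qed
  have "\<forall>i. \<exists>x. i < n \<longrightarrow> x \<in> F \<and> real i * m / n \<le> c x \<and> c x \<le> (real i + 1/2) * m / n"
  proof
    fix i show "\<exists>x. i < n \<longrightarrow> x \<in> F \<and> real i * m / n \<le> c x \<and> c x \<le> (real i + 1/2) * m / n"
    proof (cases "i < n")
      case True
      have "0 \<le> real i * m / n" using m by simp
      moreover have "real i * m / n < (real i + 1/2) * m / n" using m n by (simp add: divide_strict_right_mono)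
      moreover have "(real i + 1/2) * m / n \<le> m"
      proof -
        have "real i + 1/2 \<le> real n" using True by linarith
        hence "(real i + 1/2) * m \<le> real n * m" using m by (intro mult_right_mono) auto
        thus ?thesis using n by (simp add: divide_le_eq mult.commute)
      qed
      ultimately show ?thesis using pick by blast
    qed simp
  qed
  then obtain x where x: "\<And>i. i < n \<Longrightarrow> x i \<in> F \<and> real i * m / n \<le> c (x i) \<and> c (x i) \<le> (real i + 1/2) * m / n"
    by metis
  have sep: "x j - x i \<ge> real (j - i) * (m / (2 * n))" if ij: "i < j" "j < n" for i j
  proof -
    have xi: "c (x i) \<le> (real i + 1/2) * m / n" using x[of i] ij by simp
    have xj: "real j * m / n \<le> c (x j)" using x[of j] ij by simp
    have ji: "real j \<ge> real i + 1" using ij by simp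
    have gap: "c (x j) - c (x i) \<ge> real (j - i) * (m / (2 * n))"
    proof -
      have "real (j - i) * (m / (2 * n)) = (real j - real i) / 2 * m / n" using ij by (simp add: of_nat_diff)
      also have "\<dots> \<le> (real j - real i - 1/2) * m / n"
        using ji m n by (intro divide_right_mono mult_right_mono) auto
      also have "\<dots> = real j * m / n - (real i + 1/2) * m / n" using n by (simp add: field_simps)
      also have "\<dots> \<le> c (x j) - c (x i)" using xi xj by linarith
      finally show ?thesis .
    qed
    have gpos: "real (j - i) * (m / (2 * n)) > 0" using ij m n by simp
    have "x i \<le> x j"
    proof (rule ccontr)
      assume "\<not> x i \<le> x j"
      hence "c (x j) \<le> c (x i)" using mono[of "x j" "x i"] by simp
      thus False using gap gpos by linarith
    qed
    thus ?thesis using lip[of "x i" "x j"] gap by linarith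
  qed
  show ?thesis using x sep by blast
qed



lemma lagr_const_bound:
  assumes n: "n \<ge> 1" and eps: "0 < \<epsilon>" "\<epsilon> \<le> 1"
  shows "(4 * real n / \<epsilon>)^(n-1) / fact (n-1) \<le> (12/\<epsilon>)^n"
proof -
  obtain k where k: "n = Suc k" using n by (cases n) auto
  have "real n ^ n / fact n \<le> exp (real n)" by (rule pow_div_fact_le_exp) simp
  also have "exp (real n) = exp 1 ^ n" using exp_of_nat_mult[of n 1] by simp
  also have "\<dots> \<le> 3 ^ n" by (rule power_mono[OF exp_le]) simp
  finally have e: "real n ^ n / fact n \<le> 3 ^ n" .
  have f1: "(fact n :: real) = real n * fact k" using k by (simp only: fact_Suc of_nat_mult)
  have f2: "real n ^ n = real n * real n ^ k" using k by simp
  have npos: "real n \<noteq> 0" using n by simp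
  have eq: "real n ^ k / fact k = real n ^ n / fact n"
    unfolding f1 f2 using npos by simp
  have e1: "n - 1 = k" using k by simp
  have e2: "4 * real n / \<epsilon> = 4/\<epsilon> * real n" by simp
  have "(4 * real n / \<epsilon>)^(n-1) / fact (n-1) = (4/\<epsilon>)^k * (real n ^ k / fact k)"
    unfolding e1 e2 power_mult_distrib by simp
  also have "\<dots> \<le> (4/\<epsilon>)^n * 3^n"
  proof (rule mult_mono)
    have "1 \<le> 4/\<epsilon>" using eps by simp
    thus "(4/\<epsilon>)^k \<le> (4/\<epsilon>)^n" using k by (intro power_increasing) auto
    show "real n ^ k / fact k \<le> 3^n" using e eq by simp
  qed (use eps in auto)
  also have "\<dots> = (12/\<epsilon>)^n" by (simp add: power_mult_distrib[symmetric])
  finally show ?thesis .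
qed

lemma remez:
  fixes g :: "real \<Rightarrow> real" and diff :: "nat \<Rightarrow> real \<Rightarrow> real"
  assumes diff0: "diff 0 = g"
    and DER: "\<And>m t. a \<le> t \<Longrightarrow> t \<le> a + len \<Longrightarrow> DERIV (diff m) t :> diff (Suc m) t"
    and lpos: "len > 0"
    and derb: "\<And>m t. a \<le> t \<Longrightarrow> t \<le> a + len \<Longrightarrow> \<bar>diff m t\<bar> \<le> W * fact m * R^m"
    and Rl: "R \<ge> 0" "R * len \<le> \<epsilon> / 24"
    and eps: "0 < \<epsilon>" "\<epsilon> \<le> 1"
    and F: "F \<in> sets lebesgue" "F \<subseteq> {a..a+len}" "measure lebesgue F \<ge> \<epsilon> * len"
    and gF: "\<And>t. t \<in> F \<Longrightarrow> 0 \<le> g t \<and> g t \<le> lamsq"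
    and n: "n \<ge> 1"
    and t: "a \<le> t" "t \<le> a + len"
  shows "g t \<le> (12/\<epsilon>)^n * lamsq + 2 * W / 2^n"
proof -
  define P where "P x = (\<Sum>m<n. diff m a / fact m * (x - a)^m)" for x
  have W0: "W \<ge> 0" using derb[of a 0] lpos by simp
  define r where "r = W * (R * len)^n"
  have rem: "\<bar>g x - P x\<bar> \<le> r" if x: "a \<le> x" "x \<le> a + len" for x
  proof (cases "x = a")
    case True
    obtain k where k: "n = Suc k" using n by (cases n) auto
    have "P a = g a" unfolding P_def k using diff0
      by (subst sum.lessThan_Suc_shift) simp
    thus ?thesis using True W0 Rl lpos by (simp add: r_def)
  next
    case False
    obtain \<xi> where \<xi>: "(if x < a then x < \<xi> \<and> \<xi> < a else a < \<xi> \<and> \<xi> < x)"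
      "g x = (\<Sum>m<n. (diff m a / fact m) * (x - a)^m) + (diff n \<xi> / fact n) * (x - a)^n"
      using Taylor[of n diff g a "a+len" a x] n diff0 DER x False lpos by auto
    have xi: "a \<le> \<xi>" "\<xi> \<le> a + len" using \<xi>(1) x False by (auto split: if_splits)
    have "\<bar>g x - P x\<bar> = \<bar>diff n \<xi>\<bar> / fact n * \<bar>x - a\<bar>^n"
      using \<xi>(2) by (simp add: P_def abs_mult power_abs)
    also have "\<dots> \<le> (W * fact n * R^n) / fact n * len^n"
      using derb[OF xi] x W0 Rl by (intro mult_mono divide_right_mono power_mono) auto
    also have "\<dots> = r" by (simp add: r_def power_mult_distrib)
    finally show ?thesis .
  qed
  define m0 where "m0 = measure lebesgue F"
  have m0pos: "m0 > 0" using F eps lpos unfolding m0_def by (smt (verit) mult_pos_pos)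
  obtain x where xF: "\<And>i. i < n \<Longrightarrow> x i \<in> F"
    and sep: "\<And>i j. i < j \<Longrightarrow> j < n \<Longrightarrow> x j - x i \<ge> real (j - i) * (m0 / (2 * n))"
    using points_in_set[OF F(1) F(2) m0_def[symmetric] m0pos n] by blast
  define \<delta> where "\<delta> = m0 / (2 * n)"
  have dpos: "\<delta> > 0" using m0pos n by (simp add: \<delta>_def)
  have inj: "inj_on x {..<n}"
  proof (rule inj_onI)
    fix i j assume ij: "i \<in> {..<n}" "j \<in> {..<n}" "x i = x j"
    show "i = j"
    proof (rule ccontr)
      assume "i \<noteq> j"
      then consider "i < j" | "j < i" by linarith
      thus False
      proof cases
        case 1
        have "real (j - i) * (m0 / (2 * n)) > 0" using 1 dpos[unfolded \<delta>_def] by (intro mult_pos_pos) auto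
        thus False using sep[of i j] ij 1 by auto
      next
        case 2
        have "real (i - j) * (m0 / (2 * n)) > 0" using 2 dpos[unfolded \<delta>_def] by (intro mult_pos_pos) auto
        thus False using sep[of j i] ij 2 by auto
      qed
    qed
  qed
  have xin: "x i \<in> {a..a+len}" if "i < n" for i using xF[OF that] F(2) by auto
  have tin: "t \<in> {a..a+len}" using t by simp
  have Lb: "(\<Sum>i<n. \<bar>\<Prod>j\<in>{..<n}-{i}. (t - x j)/(x i - x j)\<bar>) \<le> ((a+len-a)/\<delta>)^(n-1) * 2^(n-1) / fact (n-1)"
    by (rule lagrange_basis_bound[OF _ dpos xin tin n]) (use sep \<delta>_def in auto)
  have Lb2: "((a+len-a)/\<delta>)^(n-1) * 2^(n-1) / fact (n-1) \<le> (12/\<epsilon>)^n"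
  proof -
    have "len/\<delta> = 2 * n * len / m0" using m0pos n by (simp add: \<delta>_def field_simps)
    also have "\<dots> \<le> 2 * n * len / (\<epsilon> * len)"
      using m0pos F(3) lpos eps n unfolding m0_def by (intro divide_left_mono) auto
    also have "\<dots> = 2 * n / \<epsilon>" using lpos by simp
    finally have q: "len/\<delta> \<le> 2 * n / \<epsilon>" .
    have "((a+len-a)/\<delta>)^(n-1) * 2^(n-1) = (2 * (len/\<delta>))^(n-1)" unfolding power_mult_distrib by (simp add: mult.commute)
    also have "\<dots> \<le> (4 * real n / \<epsilon>)^(n-1)"
      using q dpos lpos by (intro power_mono) auto
    finally have "((a+len-a)/\<delta>)^(n-1) * 2^(n-1) / fact (n-1) \<le> (4 * real n / \<epsilon>)^(n-1) / fact (n-1)"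
      by (intro divide_right_mono) auto
    also have "\<dots> \<le> (12/\<epsilon>)^n" by (rule lagr_const_bound[OF n eps])
    finally show ?thesis .
  qed
  have Pxi: "\<bar>P (x i)\<bar> \<le> lamsq + r" if "i < n" for i
  proof -
    have "\<bar>g (x i) - P (x i)\<bar> \<le> r" using rem xin[OF that] by auto
    moreover have "0 \<le> g (x i)" "g (x i) \<le> lamsq" using gF xF that by auto
    ultimately show ?thesis by linarith
  qed
  have r0: "r \<ge> 0" using W0 Rl lpos by (simp add: r_def)
  have lam0: "lamsq \<ge> 0" using gF xF[of 0] n by force
  have "P t = (\<Sum>i<n. P (x i) * (\<Prod>j\<in>{..<n}-{i}. (t - x j) / (x i - x j)))"
    unfolding P_def by (rule lagrange_identity[OF inj])
  hence "\<bar>P t\<bar> \<le> (\<Sum>i<n. \<bar>P (x i)\<bar> * \<bar>\<Prod>j\<in>{..<n}-{i}. (t - x j) / (x i - x j)\<bar>)"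
    by (simp add: abs_mult[symmetric] sum_abs)
  also have "\<dots> \<le> (\<Sum>i<n. (lamsq + r) * \<bar>\<Prod>j\<in>{..<n}-{i}. (t - x j) / (x i - x j)\<bar>)"
    by (intro sum_mono mult_right_mono) (use Pxi in auto)
  also have "\<dots> = (lamsq + r) * (\<Sum>i<n. \<bar>\<Prod>j\<in>{..<n}-{i}. (t - x j) / (x i - x j)\<bar>)"
    by (simp add: sum_distrib_left)
  also have "\<dots> \<le> (lamsq + r) * (12/\<epsilon>)^n"
    using Lb Lb2 r0 lam0 by (intro mult_left_mono) auto
  finally have Pt: "\<bar>P t\<bar> \<le> (lamsq + r) * (12/\<epsilon>)^n" .
  have gt: "g t \<le> \<bar>P t\<bar> + r" using rem[OF t] by linarith
  have h1: "(12/\<epsilon>)^n * (R*len)^n \<le> 1 / 2^n"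
  proof -
    have "(12/\<epsilon>) * (R*len) \<le> (12/\<epsilon>) * (\<epsilon>/24)" using Rl eps by (intro mult_left_mono) auto
    also have "\<dots> = 1/2" using eps by simp
    finally have "(12/\<epsilon>) * (R*len) \<le> 1/2" .
    hence "((12/\<epsilon>) * (R*len))^n \<le> (1/2)^n"
      using Rl lpos eps by (intro power_mono) auto
    thus ?thesis by (simp add: power_mult_distrib power_divide)
  qed
  have h2: "(R*len)^n \<le> 1 / 2^n"
  proof -
    have "R*len \<le> 1/2" using Rl eps by simp
    hence "(R*len)^n \<le> (1/2)^n" using Rl lpos by (intro power_mono) auto
    thus ?thesis by (simp add: power_divide)
  qed
  have "g t \<le> (12/\<epsilon>)^n * lamsq + W * ((12/\<epsilon>)^n * (R*len)^n) + W * (R*len)^n"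
    using gt Pt by (simp add: r_def algebra_simps)
  also have "\<dots> \<le> (12/\<epsilon>)^n * lamsq + W * (1/2^n) + W * (1/2^n)"
    using h1 h2 W0 eps by (intro add_mono mult_left_mono) auto
  finally show ?thesis by simp
qed


lemma pow_powr: fixes B r :: real assumes "0 < B" shows "(B ^ k) powr r = (B powr r) ^ k"
proof -
  have "B ^ k = B powr real k" using powr_realpow[OF assms] by simp
  hence "(B ^ k) powr r = B powr (real k * r)" by (simp add: powr_powr)
  also have "\<dots> = (B powr r) ^ k" using powr_power[of B r k] assms by simp
  finally show ?thesis .
qed

lemma interp_opt:
  fixes G x W A :: real
  assumes A: "A \<ge> 2" and x0: "x \<ge> 0" and W0: "W \<ge> 0"
    and allN: "\<And>n. n \<ge> 1 \<Longrightarrow> G \<le> A^n * x + 2 * W / 2^n"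
    and GW: "G \<le> W"
  shows "G \<le> (A + 2) * x powr (ln 2 / ln (2*A)) * W powr (1 - ln 2 / ln (2*A))"
proof -
  define B where "B = 2 * A"
  define \<theta> where "\<theta> = ln 2 / ln B"
  have B4: "B \<ge> 4" using A by (simp add: B_def)
  have lnB: "ln B > ln 2" using B4 by simp
  have ln2: "ln 2 > (0::real)" by simp
  have lnBp: "ln B > 0" using lnB ln2 by linarith
  have th: "0 < \<theta>" "\<theta> < 1" using lnB ln2 lnBp by (auto simp: \<theta>_def divide_less_eq)
  have Bth: "B powr \<theta> = 2"
  proof -
    have "B powr \<theta> = exp (\<theta> * ln B)" using B4 by (simp add: powr_def)
    also have "\<theta> * ln B = ln 2" using lnB ln2 lnBp by (simp add: \<theta>_def)
    finally show ?thesis by simp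
  qed
  have B1th: "B powr (1 - \<theta>) = A"
    using Bth B4 by (simp add: powr_diff B_def)
  have main: "G \<le> (A + 2) * x powr \<theta> * W powr (1 - \<theta>)"
  proof (cases "W = 0")
    case True
    hence "G \<le> 0" using GW by simp
    thus ?thesis using True th by simp
  next
    case False
    hence Wp: "W > 0" using W0 by simp
    have Wsplit: "W = W powr \<theta> * W powr (1 - \<theta>)"
      using Wp by (simp add: powr_add[symmetric])
    show ?thesis
    proof (cases "x \<ge> W")
      case True
      have "G \<le> W powr \<theta> * W powr (1 - \<theta>)" using GW Wsplit by simp
      also have "\<dots> \<le> x powr \<theta> * W powr (1 - \<theta>)"
        using True th Wp by (intro mult_right_mono powr_mono2) auto
      also have "\<dots> \<le> (A + 2) * x powr \<theta> * W powr (1 - \<theta>)"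
      proof -
        have "0 \<le> x powr \<theta> * W powr (1 - \<theta>)" by simp
        thus ?thesis using A by (simp add: mult.assoc mult_le_cancel_right1 not_less)
      qed
      finally show ?thesis .
    next
      case False
      hence xW: "x < W" by simp
      show ?thesis
      proof (cases "x = 0")
        case True
        have "G \<le> 0"
        proof (rule ccontr)
          assume "\<not> G \<le> 0" hence Gp: "G > 0" by simp
          obtain n :: nat where n: "real n > 2 * W / G" using reals_Archimedean2 by blast
          have "real n < 2 ^ n" by (rule of_nat_less_two_power)
          moreover have "(2::real) ^ n > 0" by simp
          moreover have "(2::real) ^ (n+1) = 2 * 2 ^ n" by simp
          ultimately have "2 * W / G < 2 ^ (n+1)" using n by linarith
          hence "2 * W < G * 2 ^ (n+1)" using Gp by (simp add: divide_less_eq mult.commute)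
          hence "2 * W / 2 ^ (n+1) < G" by (simp add: divide_less_eq mult.commute)
          moreover have "G \<le> 2 * W / 2 ^ (n+1)" using allN[of "n+1"] True by simp
          ultimately show False by simp
        qed
        thus ?thesis using True th by simp
      next
        case False
        hence xp: "x > 0" using x0 by simp
        define q where "q = W / x"
        have q1: "q > 1" using xW xp by (simp add: q_def)
        have ex: "\<exists>n. q \<le> B ^ n"
          using real_arch_pow[of B q] B4 by (auto intro: less_imp_le)
        define n where "n = (LEAST n. q \<le> B ^ n)"
        have qn: "q \<le> B ^ n" unfolding n_def by (rule LeastI_ex[OF ex])
        have n1: "n \<ge> 1"
        proof (rule ccontr)
          assume "\<not> n \<ge> 1" hence "n = 0" by simp
          thus False using qn q1 by simp
        qed
        have qn1: "B ^ (n - 1) < q"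
        proof -
          have "\<not> q \<le> B ^ (n - 1)" unfolding n_def
            by (rule not_less_Least) (use n1 in \<open>simp add: n_def\<close>)
          thus ?thesis by simp
        qed
        have t1: "2 * W / 2 ^ n \<le> 2 * (x powr \<theta> * W powr (1 - \<theta>))"
        proof -
          have "q powr \<theta> \<le> (B ^ n) powr \<theta>" using qn q1 th by (intro powr_mono2) auto
          also have "\<dots> = 2 ^ n" using pow_powr[of B n \<theta>] B4 Bth by simp
          finally have a: "q powr \<theta> \<le> 2 ^ n" .
          have qp: "q powr \<theta> > 0" using q1 by simp
          have "2 * W / 2 ^ n \<le> 2 * W / q powr \<theta>"
            using a qp Wp by (intro divide_left_mono) auto
          also have "q powr \<theta> = W powr \<theta> / x powr \<theta>" by (simp add: q_def powr_divide)
          also have "2 * W / (W powr \<theta> / x powr \<theta>) = 2 * (x powr \<theta> * (W / W powr \<theta>))"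
            using Wp xp by (simp add: field_simps)
          also have "W / W powr \<theta> = W powr (1 - \<theta>)" using Wp by (simp add: powr_diff)
          finally show ?thesis .
        qed
        have t2: "A ^ n * x \<le> A * (x powr \<theta> * W powr (1 - \<theta>))"
        proof -
          have "(B ^ (n-1)) powr (1 - \<theta>) \<le> q powr (1 - \<theta>)"
            using qn1 th B4 by (intro powr_mono2) auto
          moreover have "(B ^ (n-1)) powr (1 - \<theta>) = A ^ (n-1)" using pow_powr[of B "n-1" "1-\<theta>"] B4 B1th by simp
          ultimately have a: "A ^ (n-1) \<le> q powr (1 - \<theta>)" by simp
          have "A ^ n * x = A * (A ^ (n-1) * x)" using n1 by (simp add: power_eq_if)
          also have "\<dots> \<le> A * (q powr (1 - \<theta>) * x)" using a A xp by (intro mult_left_mono mult_right_mono) auto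
          also have "q powr (1 - \<theta>) * x = W powr (1 - \<theta>) * (x / x powr (1 - \<theta>))"
            by (simp add: q_def powr_divide)
          also have "x / x powr (1 - \<theta>) = x powr \<theta>"
            using xp by (simp add: powr_diff)
          finally show ?thesis by (simp add: mult_ac)
        qed
        have "G \<le> A^n * x + 2 * W / 2^n" using allN[OF n1] .
        also have "\<dots> \<le> A * (x powr \<theta> * W powr (1 - \<theta>)) + 2 * (x powr \<theta> * W powr (1 - \<theta>))"
          using t1 t2 by linarith
        also have "\<dots> = (A + 2) * x powr \<theta> * W powr (1 - \<theta>)" by (simp add: algebra_simps)
        finally show ?thesis .
      qed
    qed
  qed
  thus ?thesis by (simp only: B_def \<theta>_def)
qed


lemma obs_window:
  fixes S :: "real \<Rightarrow> 'x::real_normed_vector \<Rightarrow> 'x" and B :: "'x \<Rightarrow> 'u::real_normed_vector"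
  assumes semi: "\<forall>t s. 0 \<le> t \<longrightarrow> 0 \<le> s \<longrightarrow> S (t + s) = S t \<circ> S s"
    and observ: "\<forall>L\<in>{0<..1}. \<forall>u0\<in>gen_dom S.
           ennreal ((norm (S L u0))\<^sup>2)
             \<le> ennreal (exp (d / L powr k)) * (\<integral>\<^sup>+t\<in>{0..L}. ennreal ((norm (B (S t u0)))\<^sup>2) \<partial>lborel)"
    and dom: "S a u \<in> gen_dom S" and a: "a \<ge> 0" and L: "0 < L" "L \<le> 1"
    and G: "\<And>t. a \<le> t \<Longrightarrow> t \<le> a + L \<Longrightarrow> (norm (B (S t u)))\<^sup>2 \<le> G"
  shows "(norm (S (a + L) u))\<^sup>2 \<le> exp (d / L powr k) * L * G"
proof -
  have G0: "G \<ge> 0" using G[of a] L by (meson less_eq_real_def add_increasing2 order.trans zero_le_power2 order_refl)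
  have o: "ennreal ((norm (S L (S a u)))\<^sup>2)
             \<le> ennreal (exp (d / L powr k)) * (\<integral>\<^sup>+t\<in>{0..L}. ennreal ((norm (B (S t (S a u))))\<^sup>2) \<partial>lborel)"
    using observ L dom by auto
  have "(\<integral>\<^sup>+t\<in>{0..L}. ennreal ((norm (B (S t (S a u))))\<^sup>2) \<partial>lborel) \<le> (\<integral>\<^sup>+t. ennreal G * indicator {0..L} t \<partial>lborel)"
  proof (rule nn_integral_mono)
    fix t show "ennreal ((norm (B (S t (S a u))))\<^sup>2) * indicator {0..L} t \<le> ennreal G * indicator {0..L} t"
    proof (cases "t \<in> {0..L}")
      case True
      hence "S t (S a u) = S (t + a) u" using semi a by auto
      moreover have "(norm (B (S (t + a) u)))\<^sup>2 \<le> G" using G[of "t + a"] True by auto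
      ultimately show ?thesis using True by (simp add: ennreal_leI)
    qed simp
  qed
  also have "\<dots> = ennreal G * ennreal L" using L by (simp add: nn_integral_cmult_indicator)
  finally have "ennreal ((norm (S L (S a u)))\<^sup>2) \<le> ennreal (exp (d / L powr k)) * (ennreal G * ennreal L)"
    using o by (meson mult_left_mono order.trans zero_le)
  also have "\<dots> = ennreal (exp (d / L powr k) * L * G)"
    using G0 L by (simp add: ennreal_mult[symmetric] mult_ac)
  finally have "(norm (S L (S a u)))\<^sup>2 \<le> exp (d / L powr k) * L * G"
    using G0 L by (subst (asm) ennreal_le_iff) auto
  moreover have "S L (S a u) = S (a + L) u" using semi a L by (auto simp: add.commute)
  ultimately show ?thesis by simp
qed

lemma powr_le_exp:
  fixes z p :: real assumes "z \<ge> 0" "p \<ge> 0"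
  shows "z powr p \<le> (1 + fact (nat \<lceil>p\<rceil>)) * exp z"
proof -
  define n where "n = nat \<lceil>p\<rceil>"
  have pn: "p \<le> real n" unfolding n_def by linarith
  have a: "z powr p \<le> 1 + z ^ n"
  proof (cases "z \<le> 1")
    case True
    hence "z powr p \<le> 1" using assms by (intro powr_le1) auto
    thus ?thesis using assms by (smt (verit) zero_le_power)
  next
    case False
    hence "z powr p \<le> z powr real n" using pn by (intro powr_mono) auto
    also have "\<dots> = z ^ n" using False by (simp add: powr_realpow)
    finally show ?thesis by simp
  qed
  have b: "z ^ n \<le> fact n * exp z"
    using pow_div_fact_le_exp[OF assms(1), of n] by (simp add: divide_le_eq mult.commute)
  have c: "1 \<le> exp z" using assms by simp
  have "z powr p \<le> 1 + fact n * exp z" using a b by linarith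
  also have "\<dots> \<le> exp z + fact n * exp z" using c by simp
  also have "\<dots> = (1 + fact n) * exp z" by (simp add: algebra_simps)
  finally show ?thesis unfolding n_def .
qed


lemma set_int_nonneg:
  fixes h :: "real \<Rightarrow> real" assumes "\<And>t. h t \<ge> 0"
  shows "(LINT t:A|lebesgue. h t) \<ge> 0"
  unfolding set_lebesgue_integral_def
  by (rule Bochner_Integration.integral_nonneg) (simp add: assms indicator_def)

lemma markov_set:
  fixes h :: "real \<Rightarrow> real"
  assumes EJ: "EJ \<in> sets lebesgue" "EJ \<subseteq> {a..b}"
    and hm: "h \<in> borel_measurable lebesgue" and h0: "\<And>t. h t \<ge> 0"
    and hint: "set_integrable lebesgue EJ h"
    and II: "(LINT t:EJ|lebesgue. h t) \<le> I"
    and m: "measure lebesgue EJ = m" "m > 0"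
  shows "\<exists>F. F \<in> sets lebesgue \<and> F \<subseteq> EJ \<and> measure lebesgue F \<ge> m/2 \<and> (\<forall>t\<in>F. h t \<le> 4 * I / m)"
proof -
  have EJf: "EJ \<in> lmeasurable"
    by (rule bounded_set_imp_lmeasurable) (use EJ in \<open>auto intro: bounded_subset[OF bounded_closed_interval]\<close>)
  have IJ0: "(LINT t:EJ|lebesgue. h t) \<ge> 0" by (rule set_int_nonneg[OF h0])
  have bad_meas: "{x\<in>EJ. c \<le> h x} \<in> sets lebesgue" for c
  proof -
    have "{x\<in>EJ. c \<le> h x} = EJ \<inter> {x \<in> space lebesgue. c \<le> h x}" by auto
    also have "\<dots> \<in> sets lebesgue" using EJ(1) hm by measurable
    finally show ?thesis .
  qed
  have mk: "emeasure lebesgue {x\<in>EJ. h x \<ge> c} \<le> (1/c) * (LINT t:EJ|lebesgue. h t)" if "c > 0" for c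
    by (rule integral_Markov_inequality'[OF hint EJ(1)]) (use h0 that in auto)
  show ?thesis
  proof (cases "I > 0")
    case True
    define c where "c = 4 * I / m"
    have c0: "c > 0" using True m by (simp add: c_def)
    define Bad where "Bad = {x\<in>EJ. h x \<ge> c}"
    have Badm: "Bad \<in> sets lebesgue" unfolding Bad_def using bad_meas .
    have "emeasure lebesgue Bad \<le> ennreal ((1/c) * (LINT t:EJ|lebesgue. h t))"
      using mk[OF c0] unfolding Bad_def by simp
    also have "\<dots> \<le> ennreal ((1/c) * I)" using II c0 by (intro ennreal_leI mult_left_mono) auto
    also have "(1/c) * I = m / 4" using True m by (simp add: c_def)
    finally have eB: "emeasure lebesgue Bad \<le> ennreal (m/4)" .
    have Bf: "Bad \<in> lmeasurable" by (rule fmeasurableI2[OF EJf _ Badm]) (auto simp: Bad_def)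
    have mB: "measure lebesgue Bad \<le> m / 4"
      using eB emeasure_eq_measure2[OF Bf] m by simp
    define F where "F = EJ - Bad"
    have "measure lebesgue F = measure lebesgue EJ - measure lebesgue Bad"
      unfolding F_def by (rule measure_Diff) (use EJf Badm in \<open>auto simp: Bad_def fmeasurable_def\<close>)
    hence mF: "measure lebesgue F \<ge> m / 2" using mB m by simp
    have "\<forall>t\<in>F. h t \<le> 4 * I / m" unfolding F_def Bad_def c_def by auto
    moreover have "F \<in> sets lebesgue" unfolding F_def using EJ(1) Badm by auto
    ultimately show ?thesis using mF by (auto simp: F_def)
  next
    case False
    hence I0: "I = 0" using IJ0 II by linarith
    have nul: "{x\<in>EJ. h x \<ge> 1 / Suc k} \<in> null_sets lebesgue" for k
    proof -
      have "emeasure lebesgue {x\<in>EJ. h x \<ge> 1 / Suc k} \<le> (1/(1 / Suc k)) * (LINT t:EJ|lebesgue. h t)"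
        by (rule mk) simp
      also have "(LINT t:EJ|lebesgue. h t) = 0" using IJ0 II I0 by linarith
      finally have "emeasure lebesgue {x\<in>EJ. h x \<ge> 1 / Suc k} = 0" by simp
      thus ?thesis using bad_meas by (simp add: null_sets_def)
    qed
    define Bad where "Bad = {x\<in>EJ. h x > 0}"
    have "Bad = (\<Union>k. {x\<in>EJ. h x \<ge> 1 / Suc k})"
    proof (intro set_eqI iffI)
      fix x assume "x \<in> Bad"
      hence x: "x \<in> EJ" "h x > 0" by (auto simp: Bad_def)
      then obtain k where "1 / Suc k < h x" using reals_Archimedean by (metis inverse_eq_divide of_nat_Suc)
      thus "x \<in> (\<Union>k. {x\<in>EJ. h x \<ge> 1 / Suc k})" using x by (auto intro!: exI[of _ k] less_imp_le)
    next
      fix x assume "x \<in> (\<Union>k. {x\<in>EJ. h x \<ge> 1 / Suc k})"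
      then obtain k where "x \<in> EJ" "h x \<ge> 1 / Suc k" by auto
      moreover have "(1::real) / Suc k > 0" by simp
      ultimately have "x \<in> EJ" "h x > 0" by linarith+
      thus "x \<in> Bad" by (auto simp: Bad_def)
    qed
    hence Bn: "Bad \<in> null_sets lebesgue" using nul by auto
    define F where "F = EJ - Bad"
    have "measure lebesgue F = m" unfolding F_def using measure_Diff_null_set[OF EJ(1) Bn] m by simp
    moreover have "\<forall>t\<in>F. h t \<le> 4 * I / m" unfolding F_def Bad_def I0 using h0 by (auto simp: not_less)
    moreover have "F \<in> sets lebesgue" unfolding F_def using EJ(1) Bn by auto
    ultimately show ?thesis using m by (auto simp: F_def)
  qed
qed

lemma pigeon_cover:
  fixes E :: "real set" and N :: nat and p len D :: real
  assumes N: "N \<ge> 1" and l: "len > 0" and E: "E \<in> sets lebesgue" "E \<subseteq> {p..p + N * len}"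
    and mD: "measure lebesgue E \<ge> D"
  shows "\<exists>i<N. measure lebesgue (E \<inter> {p + real i * len .. p + real (i+1) * len}) \<ge> D / N"
proof (rule ccontr)
  assume "\<not> ?thesis"
  hence lt: "\<And>i. i < N \<Longrightarrow> measure lebesgue (E \<inter> {p + real i * len .. p + real (i+1) * len}) < D / N" by auto
  have cover: "E \<subseteq> (\<Union>i\<in>{..<N}. E \<inter> {p + real i * len .. p + real (i+1) * len})"
  proof
    fix t assume t: "t \<in> E"
    hence t1: "p \<le> t" "t \<le> p + N * len" using E by auto
    define r where "r = (t - p) / len"
    have r: "0 \<le> r" "r \<le> N" using t1 l by (auto simp: r_def divide_le_eq mult.commute)
    define i where "i = (if r = N then N - 1 else nat \<lfloor>r\<rfloor>)"
    have i: "i < N" "real i \<le> r" "r \<le> real i + 1"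
    proof -
      show "i < N"
      proof (cases "r = N")
        case True thus ?thesis using N by (simp add: i_def)
      next
        case False hence "r < N" using r by simp
        hence "\<lfloor>r\<rfloor> < int N" by linarith
        thus ?thesis using False r by (simp add: i_def nat_less_iff)
      qed
      show "real i \<le> r"
      proof (cases "r = N")
        case True thus ?thesis using N r by (simp add: i_def)
      next
        case False thus ?thesis using r by (simp add: i_def)
      qed
      show "r \<le> real i + 1"
      proof (cases "r = N")
        case True thus ?thesis using N by (simp add: i_def of_nat_diff)
      next
        case False thus ?thesis using r by (simp add: i_def)
      qed
    qed
    have "t = p + r * len" using l by (simp add: r_def)
    hence "p + real i * len \<le> t" "t \<le> p + real (i+1) * len"
      using i l by (auto intro: mult_right_mono)
    thus "t \<in> (\<Union>i\<in>{..<N}. E \<inter> {p + real i * len .. p + real (i+1) * len})" using t i by auto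
  qed
  have Ef: "E \<in> lmeasurable"
    by (rule bounded_set_imp_lmeasurable) (use E in \<open>auto intro: bounded_subset[OF bounded_closed_interval]\<close>)
  have "measure lebesgue E \<le> measure lebesgue (\<Union>i\<in>{..<N}. E \<inter> {p + real i * len .. p + real (i+1) * len})"
    by (rule measure_mono_fmeasurable[OF cover E(1)], rule fmeasurableI2[OF Ef]) (use E in auto)
  also have "\<dots> \<le> (\<Sum>i<N. measure lebesgue (E \<inter> {p + real i * len .. p + real (i+1) * len}))"
    by (rule measure_UNION_le) (use E in auto)
  also have "\<dots> < (\<Sum>i<N. D / N)"
    by (rule sum_strict_mono) (use N lt in \<open>auto simp: lessThan_empty_iff\<close>)
  also have "\<dots> = D" using N by simp
  finally show False using mD by simp
qed


definition cA :: "real \<Rightarrow> real" where "cA \<eta> = 48 / \<eta>"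
definition c\<theta> :: "real \<Rightarrow> real" where "c\<theta> \<eta> = ln 2 / ln (2 * cA \<eta>)"
definition cN :: "real \<Rightarrow> real \<Rightarrow> nat" where "cN \<rho> \<eta> = nat \<lceil>192 / (\<rho> * \<eta>^2)\<rceil>"
definition cP :: "real \<Rightarrow> real \<Rightarrow> real \<Rightarrow> real \<Rightarrow> real" where
  "cP K k \<rho> \<eta> = 2 * K * (cA \<eta> + 2) * (8 * real (cN \<rho> \<eta>) / \<eta>) powr (2 * c\<theta> \<eta>)
     * (4 * K / \<eta>^2) powr (1 - c\<theta> \<eta>) * (1 + fact (nat \<lceil>2 / k\<rceil>))"
definition cQ :: "real \<Rightarrow> real \<Rightarrow> real \<Rightarrow> real \<Rightarrow> real" where
  "cQ d k \<rho> \<eta> = d * (8 * real (cN \<rho> \<eta>)) powr k + d * (4 * real (cN \<rho> \<eta>)) powr k + 1"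

lemma sq_powr: fixes x r :: real assumes "0 \<le> x" shows "(x\<^sup>2) powr r = x powr (2 * r)"
proof (cases "x = 0")
  case False
  hence "x > 0" using assms by simp
  thus ?thesis using pow_powr[of x 2 r] powr_powr[of x r 2] powr_realpow[of x 2]
    by (simp add: mult.commute powr_power)
qed simp

lemma core:
  fixes S :: "real \<Rightarrow> 'x::{real_inner, complete_space} \<Rightarrow> 'x"
    and B :: "'x \<Rightarrow> 'u::{real_inner, complete_space}"
    and d k \<rho> K :: real
  assumes analytic: "analytic_semigroup S"
    and admissible: "\<forall>\<tau>>0. \<exists>C\<tau>>0. \<forall>u0\<in>gen_dom S.
           (\<integral>\<^sup>+t\<in>{0..\<tau>}. ennreal ((norm (B (S t u0)))\<^sup>2) \<partial>lborel) \<le> ennreal (C\<tau> * (norm u0)\<^sup>2)"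
    and dk: "d > 0" "k > 0"
    and observ: "\<forall>L\<in>{0<..1}. \<forall>u0\<in>gen_dom S.
           ennreal ((norm (S L u0))\<^sup>2)
             \<le> ennreal (exp (d / L powr k)) * (\<integral>\<^sup>+t\<in>{0..L}. ennreal ((norm (B (S t u0)))\<^sup>2) \<partial>lborel)"
    and rho: "0 < \<rho>" "\<rho> < 1"
    and K: "K \<ge> 1"
    and smooth: "\<forall>u0\<in>gen_dom S. \<forall>\<beta>::nat. \<forall>t>0.
           ((deriv ^^ \<beta>) (\<lambda>\<tau>. (norm (B (S \<tau> u0)))\<^sup>2) has_real_derivative
              (deriv ^^ Suc \<beta>) (\<lambda>\<tau>. (norm (B (S \<tau> u0)))\<^sup>2) t) (at t)"
    and deriv_est: "\<forall>u0\<in>gen_dom S. \<forall>\<beta>::nat. \<forall>t s. 0 \<le> s \<longrightarrow> 0 < t - s \<longrightarrow> t - s \<le> 1 \<longrightarrow>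
           \<bar>(deriv ^^ \<beta>) (\<lambda>\<tau>. (norm (B (S \<tau> u0)))\<^sup>2) t\<bar>
             \<le> K / (t - s)\<^sup>2 * fact \<beta> / (\<rho> * (t - s)) ^ \<beta> * (norm (S s u0))\<^sup>2"
    and eta: "0 < \<eta>" "\<eta> < 1"
    and T: "0 \<le> t1" "t1 < t2" "t2 - t1 \<le> 1"
    and E: "E \<in> sets lebesgue" "E \<subseteq> {t1..t2}" "measure lebesgue (E \<inter> {t1<..<t2}) \<ge> \<eta> * (t2 - t1)"
    and u: "u \<in> gen_dom S"
  shows "(norm (S t2 u))\<^sup>2 \<le> cP K k \<rho> \<eta> * exp (cQ d k \<rho> \<eta> / (t2 - t1) powr k)
            * (LINT t:E|lebesgue. norm (B (S t u))) powr (2 * c\<theta> \<eta>) * norm (S t1 u) powr (2 * (1 - c\<theta> \<eta>))"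
proof -
  have C0: "C0_semigroup S" and domS: "\<And>t x. t > 0 \<Longrightarrow> S t x \<in> gen_dom S"
    using analytic unfolding analytic_semigroup_def by auto
  have semi: "\<forall>t s. 0 \<le> t \<longrightarrow> 0 \<le> s \<longrightarrow> S (t + s) = S t \<circ> S s"
    using C0 unfolding C0_semigroup_def by auto
  define g where "g = (\<lambda>\<tau>. (norm (B (S \<tau> u)))\<^sup>2)"
  define f where "f = (\<lambda>\<tau>. norm (B (S \<tau> u)))"
  define h where "h = (\<lambda>\<tau>. if 0 < \<tau> then f \<tau> else 0)"
  have gcont: "isCont g t" if "t > 0" for t
  proof -
    have "((deriv ^^ 0) g has_real_derivative (deriv ^^ Suc 0) g t) (at t)"
      using smooth u that unfolding g_def by blast
    thus ?thesis by (simp add: DERIV_isCont)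
  qed
  have fg: "f t = sqrt (g t)" for t by (simp add: f_def g_def)
  have fcont: "continuous_on {0<..} f"
  proof (rule continuous_at_imp_continuous_on, rule ballI)
    fix t :: real assume "t \<in> {0<..}"
    hence "isCont g t" using gcont by simp
    hence "isCont (\<lambda>t. sqrt (g t)) t" by (intro continuous_intros)
    thus "isCont f t" unfolding fg[abs_def] .
  qed
  have hmeas: "h \<in> borel_measurable lebesgue"
  proof -
    have "h = (\<lambda>t. indicator {0<..} t *\<^sub>R f t)" by (auto simp: h_def indicator_def)
    moreover have "(\<lambda>t. indicator {0<..} t *\<^sub>R f t) \<in> borel_measurable borel"
      by (rule borel_measurable_continuous_on_indicator[OF _ fcont]) simp
    ultimately have "h \<in> borel_measurable lborel" by simp
    thus ?thesis by (rule measurable_completion)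
  qed
  have h0: "h t \<ge> 0" for t by (simp add: h_def f_def)
  define T where "T = t2 - t1"
  have T0: "0 < T" "T \<le> 1" using T by (auto simp: T_def)
  define M where "M = norm (S t1 u)"
  define I where "I = (LINT t:E|lebesgue. norm (B (S t u)))"
  define N where "N = cN \<rho> \<eta>"
  define \<epsilon> where "\<epsilon> = \<eta> / 4"
  define A where "A = cA \<eta>"
  define \<theta> where "\<theta> = c\<theta> \<eta>"
  define D where "D = \<eta> * T / 2"
  define len where "len = (T - D) / N"
  have N1: "real N \<ge> 192 / (\<rho> * \<eta>^2)" unfolding N_def cN_def by linarith
  have Npos: "N \<ge> 1"
  proof -
    have "192 / (\<rho> * \<eta>^2) > 0" using rho eta by simp
    hence "real N > 0" using N1 by linarith
    thus ?thesis by simp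
  qed
  have D0: "0 < D" "D < T" using eta T0 by (auto simp: D_def)
  have len0: "0 < len" "len \<le> T / N" using D0 Npos by (auto simp: len_def divide_right_mono)
  have "T / real N \<le> T / 1" by (rule divide_left_mono) (use T0 Npos in auto)
  hence lenT: "len \<le> T" using len0 by simp
  have Nlen: "t1 + D + real N * len = t2" using Npos by (simp add: len_def T_def)
  obtain C\<tau> where C\<tau>: "\<forall>u0\<in>gen_dom S. (\<integral>\<^sup>+t\<in>{0..t2}. ennreal ((norm (B (S t u0)))\<^sup>2) \<partial>lborel) \<le> ennreal (C\<tau> * (norm u0)\<^sup>2)"
  proof -
    have "t2 > 0" using T by linarith
    thus ?thesis using admissible that by blast
  qed
  have gint: "(\<integral>\<^sup>+t\<in>{0..t2}. ennreal (g t) \<partial>lborel) < \<infinity>"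
  proof -
    have le: "(\<integral>\<^sup>+t\<in>{0..t2}. ennreal (g t) \<partial>lborel) \<le> ennreal (C\<tau> * (norm u)\<^sup>2)"
      using C\<tau> u unfolding g_def by blast
    show ?thesis by (rule le_less_trans[OF le]) simp
  qed
  have hint: "set_integrable lebesgue E h"
    unfolding set_integrable_def
  proof (rule integrableI_bounded)
    show "(\<lambda>t. indicator E t *\<^sub>R h t) \<in> borel_measurable lebesgue" using hmeas E(1) by measurable
    have gm: "(\<lambda>t. indicator {0<..t2} t *\<^sub>R g t) \<in> borel_measurable borel"
      by (rule borel_measurable_continuous_on_indicator)
         (auto intro!: continuous_at_imp_continuous_on gcont)
    have "(\<integral>\<^sup>+t. ennreal (norm (indicator E t *\<^sub>R h t)) \<partial>lebesgue)
        \<le> (\<integral>\<^sup>+t. (indicator {0..t2} t + ennreal (indicator {0<..t2} t *\<^sub>R g t)) \<partial>lebesgue)"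
    proof (rule nn_integral_mono)
      fix t
      show "ennreal (norm (indicator E t *\<^sub>R h t)) \<le> indicator {0..t2} t + ennreal (indicator {0<..t2} t *\<^sub>R g t)"
      proof (cases "t \<in> E \<and> t > 0")
        case True
        hence t: "t \<in> {0<..t2}" "t \<in> {0..t2}" using E T by auto
        have "f t \<le> 1 + g t"
        proof (cases "f t \<le> 1")
          case True
          have "0 \<le> (norm (B (S t u)))\<^sup>2" by simp
          thus ?thesis using True unfolding g_def by linarith
        next
          case False
          hence "f t * 1 \<le> f t * f t" by (intro mult_left_mono) auto
          thus ?thesis by (simp add: g_def f_def power2_eq_square)
        qed
        hence "ennreal (f t) \<le> ennreal (1 + g t)" by (rule ennreal_leI)
        also have "\<dots> = 1 + ennreal (g t)" by (simp add: g_def ennreal_plus)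
        finally show ?thesis using True t by (simp add: h_def f_def)
      next
        case False thus ?thesis by (auto simp: h_def indicator_def)
      qed
    qed
    also have "\<dots> = (\<integral>\<^sup>+t. indicator {0..t2} t \<partial>lebesgue) + (\<integral>\<^sup>+t. ennreal (indicator {0<..t2} t *\<^sub>R g t) \<partial>lebesgue)"
      by (rule nn_integral_add) (use gm in \<open>auto intro: measurable_completion\<close>)
    also have "(\<integral>\<^sup>+t. ennreal (indicator {0<..t2} t *\<^sub>R g t) \<partial>lebesgue) = (\<integral>\<^sup>+t. ennreal (indicator {0<..t2} t *\<^sub>R g t) \<partial>lborel)"
      by (rule nn_integral_completion)
    also have "\<dots> \<le> (\<integral>\<^sup>+t\<in>{0..t2}. ennreal (g t) \<partial>lborel)"
      by (rule nn_integral_mono) (auto simp: indicator_def)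
    also have "(\<integral>\<^sup>+t. indicator {0..t2} t \<partial>lebesgue) = ennreal t2" using T by simp
    finally show "(\<integral>\<^sup>+t. ennreal (norm (indicator E t *\<^sub>R h t)) \<partial>lebesgue) < \<infinity>"
      using gint by (simp add: order_le_less_trans)
  qed
  have Ih: "I = (LINT t:E|lebesgue. h t)"
  proof -
    have eq: "(\<lambda>t. indicator E t *\<^sub>R f t) = (\<lambda>t. indicator E t *\<^sub>R h t + indicator (E \<inter> {0}) t *\<^sub>R f 0)"
      using E T by (auto simp: h_def indicator_def fun_eq_iff)
    have m1: "(\<lambda>t. indicator E t *\<^sub>R f t) \<in> borel_measurable lebesgue"
    proof -
      have Z: "E \<inter> {0} \<in> sets lebesgue" using E(1) by auto
      have a1: "(\<lambda>t. indicator E t *\<^sub>R h t) \<in> borel_measurable lebesgue" using hmeas E(1) by measurable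
      have a2: "(\<lambda>t. indicator (E \<inter> {0}) t *\<^sub>R f 0) \<in> borel_measurable lebesgue"
        by (intro borel_measurable_scaleR borel_measurable_indicator Z measurable_const) simp
      show ?thesis unfolding eq by (rule borel_measurable_add[OF a1 a2])
    qed
    have m2: "(\<lambda>t. indicator E t *\<^sub>R h t) \<in> borel_measurable lebesgue" using hmeas E(1) by measurable
    have ae: "AE t in lebesgue. indicator E t *\<^sub>R f t = indicator E t *\<^sub>R h t"
      by (rule AE_mp[OF AE_completion[OF AE_lborel_singleton[of 0]]]) (use E T in \<open>auto simp: h_def indicator_def intro!: AE_I2\<close>)
    show ?thesis unfolding I_def set_lebesgue_integral_def f_def[symmetric]
      by (rule integral_cong_AE[OF m1 m2 ae])
  qed
  have I0: "I \<ge> 0" unfolding Ih by (rule set_int_nonneg[OF h0])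
  have sub: "set_integrable lebesgue EJ h \<and> (LINT t:EJ|lebesgue. h t) \<le> I" if EJ: "EJ \<in> sets lebesgue" "EJ \<subseteq> E" for EJ
  proof
    show si: "set_integrable lebesgue EJ h" by (rule set_integrable_subset[OF hint EJ])
    show "(LINT t:EJ|lebesgue. h t) \<le> I" unfolding Ih set_lebesgue_integral_def
      by (rule integral_mono) (use si hint EJ h0 in \<open>auto simp: set_integrable_def indicator_def\<close>)
  qed
  define E' where "E' = E \<inter> {t1 + D..t2}"
  have Ileb: "{x..y} \<in> sets lebesgue" for x y :: real using lmeasurable_interval(1)[of x y] by (rule fmeasurableD)
  have E'm: "E' \<in> sets lebesgue" using E(1) Ileb by (auto simp: E'_def)
  have mE': "measure lebesgue E' \<ge> D"
  proof -
    have Eb: "E \<in> lmeasurable"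
      by (rule bounded_set_imp_lmeasurable) (use E in \<open>auto intro: bounded_subset[OF bounded_closed_interval]\<close>)
    have E'f: "E' \<in> lmeasurable" by (rule fmeasurableI2[OF Eb _ E'm]) (auto simp: E'_def)
    have "E \<inter> {t1<..<t2} \<subseteq> {t1<..<t1 + D} \<union> E'" by (auto simp: E'_def)
    hence "measure lebesgue (E \<inter> {t1<..<t2}) \<le> measure lebesgue ({t1<..<t1 + D} \<union> E')"
      by (intro measure_mono_fmeasurable) (use E(1) E'f in auto)
    also have "\<dots> \<le> measure lebesgue {t1<..<t1 + D} + measure lebesgue E'"
      by (rule measure_Un_le) (use E'm in auto)
    also have "measure lebesgue {t1<..<t1 + D} = D" using D0 by simp
    finally have "\<eta> * T \<le> D + measure lebesgue E'" using E(3) by (simp add: T_def)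
    thus ?thesis by (simp add: D_def)
  qed
  obtain i where i: "i < N" "measure lebesgue (E' \<inter> {t1 + D + real i * len .. t1 + D + real (i+1) * len}) \<ge> D / N"
    using pigeon_cover[OF Npos len0(1) E'm _ mE'] Nlen by (auto simp: E'_def)
  define a where "a = t1 + D + real i * len"
  have a_eq: "t1 + D + real (i+1) * len = a + len" by (simp add: a_def algebra_simps)
  have aD: "a \<ge> t1 + D" using len0 by (simp add: a_def)
  have alen: "a + len \<le> t2"
  proof -
    have "real (i+1) * len \<le> real N * len" using i(1) len0 by (intro mult_right_mono) auto
    thus ?thesis using Nlen a_eq by linarith
  qed
  have a0: "a > 0" using aD D0 T by linarith
  define EJ where "EJ = E' \<inter> {a..a+len}"
  have EJm: "EJ \<in> sets lebesgue" using E'm Ileb by (auto simp: EJ_def)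
  have EJsub: "EJ \<subseteq> E" "EJ \<subseteq> {a..a+len}" by (auto simp: EJ_def E'_def)
  define mJ where "mJ = measure lebesgue EJ"
  have mJ: "mJ \<ge> D / N" using i(2) unfolding a_eq[unfolded a_def] by (simp add: mJ_def EJ_def a_def)
  have "D / N > 0" using D0 Npos by simp
  hence mJ0: "mJ > 0" using mJ by linarith
  obtain F where F: "F \<in> sets lebesgue" "F \<subseteq> EJ" "measure lebesgue F \<ge> mJ/2" "\<forall>t\<in>F. h t \<le> 4 * I / mJ"
    using markov_set[OF EJm EJsub(2) hmeas h0, of I mJ] sub[OF EJm EJsub(1)] mJ0 by (auto simp: mJ_def)
  define c where "c = 4 * I / mJ"
  have c0: "c \<ge> 0" using I0 mJ0 by (simp add: c_def)
  define W where "W = K / D\<^sup>2 * M\<^sup>2"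
  define R where "R = 1 / (\<rho> * D)"
  have W0: "W \<ge> 0" using K by (simp add: W_def)
  have tJ: "D \<le> t - t1" "t - t1 \<le> 1" "t > 0" if "a \<le> t" "t \<le> a + len" for t
    using that aD alen T a0 by (auto simp: T_def)
  have derb: "\<bar>(deriv ^^ m) g t\<bar> \<le> W * fact m * R^m" if "a \<le> t" "t \<le> a + len" for m t
  proof -
    note tt = tJ[OF that]
    have pos: "t - t1 > 0" using tt D0 by linarith
    have "\<bar>(deriv ^^ m) g t\<bar> \<le> K / (t - t1)\<^sup>2 * fact m / (\<rho> * (t - t1)) ^ m * M\<^sup>2"
      using deriv_est u T tt pos unfolding g_def M_def by auto
    also have "\<dots> = K * M\<^sup>2 * fact m * (1 / (t - t1)\<^sup>2) * (1 / (\<rho> * (t - t1))) ^ m"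
      by (simp add: field_simps power_divide)
    also have "\<dots> \<le> K * M\<^sup>2 * fact m * (1 / D\<^sup>2) * (1 / (\<rho> * D)) ^ m"
    proof -
      have q1: "1 / (t - t1)\<^sup>2 \<le> 1 / D\<^sup>2"
      proof (rule divide_left_mono)
        show "D\<^sup>2 \<le> (t - t1)\<^sup>2" using tt D0 by (intro power_mono) auto
      qed (use D0 pos in auto)
      have "1 / (\<rho> * (t - t1)) \<le> 1 / (\<rho> * D)"
      proof (rule divide_left_mono)
        show "\<rho> * D \<le> \<rho> * (t - t1)" using tt rho by (intro mult_left_mono) auto
      qed (use D0 pos rho in auto)
      hence q2: "(1 / (\<rho> * (t - t1))) ^ m \<le> (1 / (\<rho> * D)) ^ m" using pos rho by (intro power_mono) auto
      have "(1 / (t - t1)\<^sup>2) * (1 / (\<rho> * (t - t1))) ^ m \<le> (1 / D\<^sup>2) * (1 / (\<rho> * D)) ^ m"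
        by (rule mult_mono[OF q1 q2]) (use rho pos in auto)
      hence "(K * M\<^sup>2 * fact m) * ((1 / (t - t1)\<^sup>2) * (1 / (\<rho> * (t - t1))) ^ m) \<le> (K * M\<^sup>2 * fact m) * ((1 / D\<^sup>2) * (1 / (\<rho> * D)) ^ m)"
        using K by (intro mult_left_mono) auto
      thus ?thesis by (simp add: mult.assoc)
    qed
    also have "\<dots> = W * fact m * R^m" by (simp add: W_def R_def field_simps)
    finally show ?thesis .
  qed
  have gW: "g t \<le> W" if "a \<le> t" "t \<le> a + len" for t
    using derb[OF that, of 0] by (simp add: W_def)
  have remez_all: "g t \<le> (12/\<epsilon>)^n * c\<^sup>2 + 2 * W / 2^n" if n: "n \<ge> 1" and t: "a \<le> t" "t \<le> a + len" for n t
  proof (rule remez[where diff = "\<lambda>m. (deriv ^^ m) g" and F = F and len = len and R = R and W = W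
      and g = g and a = a and \<epsilon> = \<epsilon> and lamsq = "c\<^sup>2" and n = n and t = t])
    show "(\<lambda>m. (deriv ^^ m) g) 0 = g" by simp
    show "DERIV ((deriv ^^ m) g) s :> (deriv ^^ Suc m) g s" if "a \<le> s" "s \<le> a + len" for m s
      using smooth u tJ[OF that] unfolding g_def by blast
    show "0 < len" by (rule len0)
    show "\<bar>(deriv ^^ m) g s\<bar> \<le> W * fact m * R ^ m" if "a \<le> s" "s \<le> a + len" for m s by (rule derb[OF that])
    show "R \<ge> 0" using rho D0 by (simp add: R_def)
    show "R * len \<le> \<epsilon> / 24"
    proof -
      have "R * len \<le> (1 / (\<rho> * D)) * (T / N)" unfolding R_def using len0 rho D0 by (intro mult_left_mono) auto
      also have "\<dots> = 2 / (\<rho> * \<eta> * N)" using T0 eta rho by (simp add: D_def field_simps)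
      also have "\<dots> \<le> 2 / (\<rho> * \<eta> * (192 / (\<rho> * \<eta>^2)))"
      proof -
        have p1: "0 < \<rho> * \<eta> * (192 / (\<rho> * \<eta>^2))" using rho eta by simp
        have p2: "\<rho> * \<eta> * (192 / (\<rho> * \<eta>^2)) \<le> \<rho> * \<eta> * N" using N1 rho eta by (intro mult_left_mono) auto
        have p3: "0 < (\<rho> * \<eta> * N) * (\<rho> * \<eta> * (192 / (\<rho> * \<eta>^2)))" using p1 p2 by (intro mult_pos_pos[OF _ p1]) linarith
        show ?thesis by (rule divide_left_mono[OF p2 _ p3]) simp
      qed
      also have "\<dots> = \<epsilon> / 24" using rho eta by (simp add: \<epsilon>_def field_simps power2_eq_square)
      finally show ?thesis .
    qed
    show "0 < \<epsilon>" "\<epsilon> \<le> 1" using eta by (auto simp: \<epsilon>_def)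
    show "F \<in> sets lebesgue" by (rule F(1))
    show "F \<subseteq> {a..a + len}" using F(2) EJsub by auto
    show "\<epsilon> * len \<le> measure lebesgue F"
    proof -
      have "\<epsilon> * len \<le> \<epsilon> * (T / N)" using len0 eta by (intro mult_left_mono) (auto simp: \<epsilon>_def)
      also have "\<dots> = D / N / 2" by (simp add: \<epsilon>_def D_def)
      also have "\<dots> \<le> mJ / 2" using mJ by simp
      finally show ?thesis using F(3) by simp
    qed
    show "0 \<le> g s \<and> g s \<le> c\<^sup>2" if "s \<in> F" for s
    proof -
      have s: "s > 0" "h s \<le> c" using that F(2,4) EJsub a0 by (auto simp: c_def)
      hence "f s \<le> c" by (simp add: h_def)
      moreover have "f s \<ge> 0" by (simp add: f_def)
      ultimately have "(f s)\<^sup>2 \<le> c\<^sup>2" by (intro power_mono) auto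
      thus ?thesis by (simp add: f_def g_def)
    qed
  qed (use n t in auto)
  have A2: "A \<ge> 2" using eta by (simp add: A_def cA_def le_divide_eq)
  have A_eq: "12 / \<epsilon> = A" by (simp add: A_def cA_def \<epsilon>_def)
  define Gs where "Gs = (A + 2) * (c\<^sup>2) powr \<theta> * W powr (1 - \<theta>)"
  have gGs: "g t \<le> Gs" if "a \<le> t" "t \<le> a + len" for t
    unfolding Gs_def \<theta>_def c\<theta>_def A_def[symmetric]
    by (rule interp_opt[OF A2 _ W0]) (use remez_all[OF _ that] A_eq gW[OF that] in auto)
  have th: "0 < \<theta>" "\<theta> < 1"
  proof -
    have "ln (2 * A) > ln 2" using A2 by simp
    moreover have l2: "ln (2::real) > 0" by simp
    ultimately have pos: "ln (2 * A) > 0" by linarith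
    have th_eq: "\<theta> = ln 2 / ln (2 * A)" by (simp add: \<theta>_def c\<theta>_def A_def)
    show "0 < \<theta>" unfolding th_eq by (rule divide_pos_pos[OF l2 pos])
    show "\<theta> < 1" unfolding th_eq by (subst divide_less_eq_1_pos[OF pos]) (rule \<open>ln (2 * A) > ln 2\<close>)
  qed
  define s where "s = a + len / 2"
  have s0: "s > 0" using a0 len0 by (simp add: s_def)
  have obs1: "(norm (S s u))\<^sup>2 \<le> exp (d / (len / 2) powr k) * (len / 2) * Gs"
    unfolding s_def
    by (rule obs_window[OF semi observ domS[OF a0]]) (use a0 len0 lenT T0 gGs in \<open>auto simp: g_def\<close>)
  define w where "w = (s + t2) / 2"
  define L2 where "L2 = t2 - w"
  have sle: "s + len / 2 \<le> t2" using alen by (simp add: s_def)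
  have st1: "s \<ge> t1" using aD D0 len0 by (simp add: s_def)
  have L2e: "L2 = (t2 - s) / 2" by (simp add: L2_def w_def field_simps)
  have L2b1: "L2 \<ge> len / 4" using sle len0 unfolding L2e by (simp add: field_simps)
  have L2b2: "L2 \<le> 1" using st1 T sle len0 unfolding L2e by (simp add: field_simps)
  have L2b3: "L2 > 0" using sle len0 unfolding L2e by (simp add: field_simps)
  note L2b = L2b1 L2b2 L2b3
  have w0: "w > 0" using s0 T by (simp add: w_def)
  have wL: "w + L2 = t2" by (simp add: L2_def)
  have gwin: "(norm (B (S t u)))\<^sup>2 \<le> K / L2\<^sup>2 * (norm (S s u))\<^sup>2" if "w \<le> t" "t \<le> w + L2" for t
  proof -
    have ts1: "L2 \<le> t - s" using that(1) unfolding L2e w_def by (simp add: field_simps)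
    have ts2: "t - s \<le> 1" using that(2) wL st1 T by linarith
    note ts = ts1 ts2
    have tsp: "0 < t - s" using ts1 L2b by linarith
    have "\<bar>(deriv ^^ 0) g t\<bar> \<le> K / (t - s)\<^sup>2 * fact 0 / (\<rho> * (t - s)) ^ 0 * (norm (S s u))\<^sup>2"
      unfolding g_def by (rule deriv_est[rule_format, OF u, of s t 0]) (use s0 tsp ts2 in auto)
    hence "g t \<le> K / (t - s)\<^sup>2 * (norm (S s u))\<^sup>2" by simp
    also have "\<dots> \<le> K / L2\<^sup>2 * (norm (S s u))\<^sup>2"
    proof (intro mult_right_mono divide_left_mono)
      show "L2\<^sup>2 \<le> (t - s)\<^sup>2" using ts L2b by (intro power_mono) auto
    qed (use K L2b ts in auto)
    finally show ?thesis by (simp add: g_def)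
  qed
  have obs2: "(norm (S (w + L2) u))\<^sup>2 \<le> exp (d / L2 powr k) * L2 * (K / L2\<^sup>2 * (norm (S s u))\<^sup>2)"
    by (rule obs_window[OF semi observ domS[OF w0]]) (use w0 L2b gwin in auto)
  define e1 where "e1 = exp (d / (len / 2) powr k)"
  define e2 where "e2 = exp (d / L2 powr k)"
  have Gs0: "Gs \<ge> 0" using A2 by (simp add: Gs_def)
  have X1: "(norm (S t2 u))\<^sup>2 \<le> e2 * (K / L2) * (norm (S s u))\<^sup>2"
    using obs2 wL L2b by (simp add: e2_def power2_eq_square field_simps)
  also have "\<dots> \<le> e2 * (K / L2) * (e1 * (len / 2) * Gs)"
    using obs1 K L2b by (intro mult_left_mono) (auto simp: e1_def e2_def)
  also have "\<dots> = e1 * e2 * K * ((len / 2) / L2) * Gs" by (simp add: field_simps)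
  also have "\<dots> \<le> e1 * e2 * K * 2 * Gs"
  proof -
    have "(len / 2) / L2 \<le> 2" using L2b len0 by (simp add: divide_le_eq)
    thus ?thesis using K Gs0 by (intro mult_right_mono mult_left_mono) (auto simp: e1_def e2_def)
  qed
  finally have X: "(norm (S t2 u))\<^sup>2 \<le> 2 * K * (e1 * e2) * Gs" by (simp add: mult_ac)
  define Ip where "Ip = I powr (2 * \<theta>)"
  define Mp where "Mp = M powr (2 * (1 - \<theta>))"
  have stepA: "(c\<^sup>2) powr \<theta> \<le> (8 * N / \<eta>) powr (2 * \<theta>) * Ip / T powr (2 * \<theta>)"
  proof -
    have "c \<le> 4 * I / (D / N)" unfolding c_def using I0 mJ mJ0 D0 Npos by (intro divide_left_mono) auto
    also have "\<dots> = (8 * N / \<eta>) / T * I" using eta T0 Npos by (simp add: D_def field_simps)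
    finally have cl: "c \<le> (8 * N / \<eta>) / T * I" .
    have "(c\<^sup>2) powr \<theta> = c powr (2 * \<theta>)" by (rule sq_powr[OF c0])
    also have "\<dots> \<le> ((8 * N / \<eta>) / T * I) powr (2 * \<theta>)" using cl c0 th by (intro powr_mono2) auto
    also have "\<dots> = (8 * N / \<eta>) powr (2 * \<theta>) * Ip / T powr (2 * \<theta>)"
      by (simp add: powr_mult powr_divide Ip_def)
    finally show ?thesis .
  qed
  have stepB: "W powr (1 - \<theta>) = (4 * K / \<eta>^2) powr (1 - \<theta>) * Mp / T powr (2 * (1 - \<theta>))"
  proof -
    have "W = (4 * K / \<eta>^2) / T\<^sup>2 * M\<^sup>2" using eta T0 by (simp add: W_def D_def field_simps power2_eq_square)
    hence "W powr (1 - \<theta>) = (4 * K / \<eta>^2) powr (1 - \<theta>) / (T\<^sup>2) powr (1 - \<theta>) * (M\<^sup>2) powr (1 - \<theta>)"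
      by (simp add: powr_mult powr_divide)
    also have "(T\<^sup>2) powr (1 - \<theta>) = T powr (2 * (1 - \<theta>))" using T0 by (intro sq_powr) auto
    also have "(M\<^sup>2) powr (1 - \<theta>) = Mp" unfolding Mp_def by (rule sq_powr) (simp add: M_def)
    finally show ?thesis by simp
  qed
  have Tpow: "T powr (2 * \<theta>) * T powr (2 * (1 - \<theta>)) = T\<^sup>2"
  proof -
    have "T powr (2 * \<theta>) * T powr (2 * (1 - \<theta>)) = T powr 2" by (simp add: powr_add[symmetric] algebra_simps)
    also have "\<dots> = T\<^sup>2" using T0 by (simp add: powr_realpow[of T 2, simplified])
    finally show ?thesis .
  qed
  define P0 where "P0 = (A + 2) * (8 * N / \<eta>) powr (2 * \<theta>) * (4 * K / \<eta>^2) powr (1 - \<theta>)"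
  have stepC: "Gs \<le> P0 * Ip * Mp / T\<^sup>2"
  proof -
    have "Gs \<le> (A + 2) * ((8 * N / \<eta>) powr (2 * \<theta>) * Ip / T powr (2 * \<theta>)) * W powr (1 - \<theta>)"
      unfolding Gs_def using stepA A2 by (intro mult_right_mono mult_left_mono) auto
    also have "\<dots> = P0 * Ip * Mp / (T powr (2 * \<theta>) * T powr (2 * (1 - \<theta>)))"
      unfolding stepB P0_def by (simp add: field_simps)
    also have "\<dots> = P0 * Ip * Mp / T\<^sup>2" unfolding Tpow ..
    finally show ?thesis .
  qed
  have Tk: "T powr k > 0" using T0 by simp
  have "\<eta> * T \<le> 1 * T" using eta T0 by (intro mult_right_mono) auto
  hence "T / 2 \<le> T - D" by (simp add: D_def)
  hence lenlow: "T / 2 / N \<le> len" unfolding len_def by (rule divide_right_mono) simp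
  have l4: "T / (4 * N) = T / 2 / N / 2" and l8: "T / (8 * N) = T / 2 / N / 4" by simp_all
  have e1b: "e1 \<le> exp (d * (4 * N) powr k / T powr k)"
  proof -
    have "T / (4 * N) \<le> len / 2" unfolding l4 using lenlow by simp
    hence "(T / (4 * N)) powr k \<le> (len / 2) powr k" using T0 Npos dk by (intro powr_mono2) auto
    moreover have "(T / (4 * N)) powr k = T powr k / (4 * N) powr k" by (simp add: powr_divide)
    moreover have "(T / (4 * N)) powr k > 0" using T0 Npos by simp
    ultimately have le: "T powr k / (4 * N) powr k \<le> (len / 2) powr k" and p: "0 < T powr k / (4 * N) powr k" by simp_all
    have q: "0 < (len / 2) powr k" using len0 L2b by simp
    have r: "0 < (len / 2) powr k * (T powr k / (4 * N) powr k)" by (rule mult_pos_pos[OF q p])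
    have "d / (len / 2) powr k \<le> d / (T powr k / (4 * N) powr k)"
      by (rule divide_left_mono[OF le _ r]) (use dk in simp)
    thus ?thesis unfolding e1_def by (simp add: divide_divide_eq_right mult.commute)
  qed
  have e2b: "e2 \<le> exp (d * (8 * N) powr k / T powr k)"
  proof -
    have "T / (8 * N) \<le> L2" unfolding l8 using lenlow L2b by simp
    hence "(T / (8 * N)) powr k \<le> L2 powr k" using T0 Npos dk by (intro powr_mono2) auto
    moreover have "(T / (8 * N)) powr k = T powr k / (8 * N) powr k" by (simp add: powr_divide)
    moreover have "(T / (8 * N)) powr k > 0" using T0 Npos by simp
    ultimately have le: "T powr k / (8 * N) powr k \<le> L2 powr k" and p: "0 < T powr k / (8 * N) powr k" by simp_all
    have q: "0 < L2 powr k" using len0 L2b by simp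
    have r: "0 < L2 powr k * (T powr k / (8 * N) powr k)" by (rule mult_pos_pos[OF q p])
    have "d / L2 powr k \<le> d / (T powr k / (8 * N) powr k)"
      by (rule divide_left_mono[OF le _ r]) (use dk in simp)
    thus ?thesis unfolding e2_def by (simp add: divide_divide_eq_right mult.commute)
  qed
  have invT: "1 / T\<^sup>2 \<le> (1 + fact (nat \<lceil>2 / k\<rceil>)) * exp (1 / T powr k)"
  proof -
    have "(1 / T powr k) powr (2 / k) = 1 / T\<^sup>2"
    proof -
      have "(1 / T powr k) powr (2 / k) = 1 / (T powr k) powr (2 / k)" by (simp add: powr_divide)
      also have "(T powr k) powr (2 / k) = T powr 2" using dk by (simp add: powr_powr)
      also have "\<dots> = T\<^sup>2" using T0 by (simp add: powr_realpow[of T 2, simplified])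
      finally show ?thesis .
    qed
    moreover have "(1 / T powr k) powr (2 / k) \<le> (1 + fact (nat \<lceil>2 / k\<rceil>)) * exp (1 / T powr k)"
      by (rule powr_le_exp) (use dk in auto)
    ultimately show ?thesis by simp
  qed
  have eT: "e1 * e2 / T\<^sup>2 \<le> (1 + fact (nat \<lceil>2 / k\<rceil>)) * exp (cQ d k \<rho> \<eta> / T powr k)"
  proof -
    have "e1 * e2 / T\<^sup>2 = (e1 * e2) * (1 / T\<^sup>2)" by simp
    also have "\<dots> \<le> (exp (d * (4 * N) powr k / T powr k) * exp (d * (8 * N) powr k / T powr k))
                   * ((1 + fact (nat \<lceil>2 / k\<rceil>)) * exp (1 / T powr k))"
      using e1b e2b invT by (intro mult_mono) (auto simp: e1_def e2_def)
    also have "\<dots> = (1 + fact (nat \<lceil>2 / k\<rceil>)) * exp ((d * (8 * N) powr k + d * (4 * N) powr k + 1) / T powr k)"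
      by (simp add: exp_add[symmetric] add_divide_distrib algebra_simps)
    also have "\<dots> = (1 + fact (nat \<lceil>2 / k\<rceil>)) * exp (cQ d k \<rho> \<eta> / T powr k)"
      by (simp add: cQ_def N_def)
    finally show ?thesis .
  qed
  have P0pos: "P0 \<ge> 0" using A2 by (simp add: P0_def)
  have IpMp: "Ip * Mp \<ge> 0" by (simp add: Ip_def Mp_def)
  have "(norm (S t2 u))\<^sup>2 \<le> 2 * K * (e1 * e2) * (P0 * Ip * Mp / T\<^sup>2)"
    using X stepC K by (smt (verit, best) e1_def e2_def exp_gt_zero mult_left_mono mult_pos_pos)
  also have "\<dots> = 2 * K * P0 * (Ip * Mp) * (e1 * e2 / T\<^sup>2)" by (simp add: field_simps)
  also have "\<dots> \<le> 2 * K * P0 * (Ip * Mp) * ((1 + fact (nat \<lceil>2 / k\<rceil>)) * exp (cQ d k \<rho> \<eta> / T powr k))"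
    using eT K P0pos IpMp by (intro mult_left_mono) auto
  also have "\<dots> = cP K k \<rho> \<eta> * exp (cQ d k \<rho> \<eta> / T powr k) * Ip * Mp"
    by (simp add: cP_def P0_def A_def \<theta>_def N_def mult_ac)
  finally show ?thesis by (simp add: Ip_def Mp_def I_def M_def \<theta>_def T_def)
qed


lemma c\<theta>_bounds: assumes "0 < \<eta>" "\<eta> < 1" shows "0 < c\<theta> \<eta>" "c\<theta> \<eta> < 1"
proof -
  have A2: "cA \<eta> \<ge> 2" using assms by (simp add: cA_def le_divide_eq)
  have l: "ln (2 * cA \<eta>) > ln 2" using A2 by simp
  moreover have l2: "ln (2::real) > 0" by simp
  ultimately have pos: "ln (2 * cA \<eta>) > 0" by linarith
  show "0 < c\<theta> \<eta>" unfolding c\<theta>_def by (rule divide_pos_pos[OF l2 pos])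
  show "c\<theta> \<eta> < 1" unfolding c\<theta>_def by (subst divide_less_eq_1_pos[OF pos]) (rule l)
qed

lemma powr_sq: fixes x a :: real shows "(x powr a)\<^sup>2 = x powr (2 * a)"
  by (simp add: power2_eq_square powr_add[symmetric])

theorem lemma2p3:
  fixes S :: "real \<Rightarrow> 'x::{real_inner, complete_space} \<Rightarrow> 'x"
    and B :: "'x \<Rightarrow> 'u::{real_inner, complete_space}"
    and d k \<rho> K :: real
  assumes analytic: "analytic_semigroup S"
    and B_bdd: "bounded_on_graph S B"
    and admissible: "\<forall>\<tau>>0. \<exists>C\<tau>>0. \<forall>u0\<in>gen_dom S.
           (\<integral>\<^sup>+t\<in>{0..\<tau>}. ennreal ((norm (B (S t u0)))\<^sup>2) \<partial>lborel) \<le> ennreal (C\<tau> * (norm u0)\<^sup>2)"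
    and dk: "d > 0" "k > 0"
    and observ: "\<forall>L\<in>{0<..1}. \<forall>u0\<in>gen_dom S.
           ennreal ((norm (S L u0))\<^sup>2)
             \<le> ennreal (exp (d / L powr k)) * (\<integral>\<^sup>+t\<in>{0..L}. ennreal ((norm (B (S t u0)))\<^sup>2) \<partial>lborel)"
    and rho: "0 < \<rho>" "\<rho> < 1"
    and K: "K \<ge> 1"
    and smooth: "\<forall>u0\<in>gen_dom S. \<forall>\<beta>::nat. \<forall>t>0.
           ((deriv ^^ \<beta>) (\<lambda>\<tau>. (norm (B (S \<tau> u0)))\<^sup>2) has_real_derivative
              (deriv ^^ Suc \<beta>) (\<lambda>\<tau>. (norm (B (S \<tau> u0)))\<^sup>2) t) (at t)"
    and deriv_est: "\<forall>u0\<in>gen_dom S. \<forall>\<beta>::nat. \<forall>t s. 0 \<le> s \<longrightarrow> 0 < t - s \<longrightarrow> t - s \<le> 1 \<longrightarrow>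
           \<bar>(deriv ^^ \<beta>) (\<lambda>\<tau>. (norm (B (S \<tau> u0)))\<^sup>2) t\<bar>
             \<le> K / (t - s)\<^sup>2 * fact \<beta> / (\<rho> * (t - s)) ^ \<beta> * (norm (S s u0))\<^sup>2"
  shows "\<forall>\<eta>. 0 < \<eta> \<and> \<eta> < 1 \<longrightarrow>
           (\<exists>C>0. \<exists>\<theta>. 0 < \<theta> \<and> \<theta> < 1 \<and>
             (\<forall>t1 t2 E u0. 0 \<le> t1 \<longrightarrow> t1 < t2 \<longrightarrow> t2 - t1 \<le> 1 \<longrightarrow>
                E \<in> sets lebesgue \<longrightarrow> E \<subseteq> {t1..t2} \<longrightarrow> measure lebesgue E > 0 \<longrightarrow>
                measure lebesgue (E \<inter> {t1<..<t2}) \<ge> \<eta> * (t2 - t1) \<longrightarrow>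
                u0 \<in> gen_dom S \<longrightarrow>
                norm (S t2 u0)
                  \<le> (C * exp (C / (t2 - t1) powr k) * (LINT t:E|lebesgue. norm (B (S t u0)))) powr \<theta>
                    * norm (S t1 u0) powr (1 - \<theta>)))"
proof (intro allI impI)
  fix \<eta> :: real assume eta: "0 < \<eta> \<and> \<eta> < 1"
  define \<theta> where "\<theta> = c\<theta> \<eta>"
  define P where "P = cP K k \<rho> \<eta>"
  define Q where "Q = cQ d k \<rho> \<eta>"
  have th: "0 < \<theta>" "\<theta> < 1" using c\<theta>_bounds eta by (auto simp: \<theta>_def)
  have P0: "P \<ge> 0" using K eta by (simp add: P_def cP_def cA_def)
  define C where "C = max 1 (max (P powr (1 / (2 * \<theta>))) (Q / (2 * \<theta>)))"
  have C1: "C \<ge> 1" by (simp add: C_def)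
  have CP: "C powr (2 * \<theta>) \<ge> P"
  proof -
    have "P powr (1 / (2 * \<theta>)) \<le> C" by (simp add: C_def)
    hence "(P powr (1 / (2 * \<theta>))) powr (2 * \<theta>) \<le> C powr (2 * \<theta>)" using th by (intro powr_mono2) auto
    moreover have "(P powr (1 / (2 * \<theta>))) powr (2 * \<theta>) = P" using th P0 by (simp add: powr_powr)
    ultimately show ?thesis by simp
  qed
  have CQ: "2 * \<theta> * C \<ge> Q"
  proof -
    have "Q / (2 * \<theta>) \<le> C" by (simp add: C_def)
    thus ?thesis using th by (simp add: divide_le_eq mult.commute)
  qed
  have main: "\<forall>t1 t2 E u0. 0 \<le> t1 \<longrightarrow> t1 < t2 \<longrightarrow> t2 - t1 \<le> 1 \<longrightarrow>
                E \<in> sets lebesgue \<longrightarrow> E \<subseteq> {t1..t2} \<longrightarrow> measure lebesgue E > 0 \<longrightarrow>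
                measure lebesgue (E \<inter> {t1<..<t2}) \<ge> \<eta> * (t2 - t1) \<longrightarrow>
                u0 \<in> gen_dom S \<longrightarrow>
                norm (S t2 u0)
                  \<le> (C * exp (C / (t2 - t1) powr k) * (LINT t:E|lebesgue. norm (B (S t u0)))) powr \<theta>
                    * norm (S t1 u0) powr (1 - \<theta>)"
  proof (intro allI impI)
    fix t1 t2 :: real and E u0
    assume T: "0 \<le> t1" "t1 < t2" "t2 - t1 \<le> 1" and Em: "E \<in> sets lebesgue" and Es: "E \<subseteq> {t1..t2}"
      and Epos: "measure lebesgue E > 0" and Eeta: "measure lebesgue (E \<inter> {t1<..<t2}) \<ge> \<eta> * (t2 - t1)"
      and u: "u0 \<in> gen_dom S"
    define I where "I = (LINT t:E|lebesgue. norm (B (S t u0)))"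
    define M where "M = norm (S t1 u0)"
    define Tk where "Tk = (t2 - t1) powr k"
    have Tk0: "Tk > 0" using T by (simp add: Tk_def)
    have I0: "I \<ge> 0" unfolding I_def set_lebesgue_integral_def
      by (rule Bochner_Integration.integral_nonneg) (simp add: indicator_def)
    have sq: "(norm (S t2 u0))\<^sup>2 \<le> P * exp (Q / Tk) * I powr (2 * \<theta>) * M powr (2 * (1 - \<theta>))"
      unfolding P_def Q_def I_def M_def Tk_def \<theta>_def
      by (rule core[OF analytic admissible dk observ rho K smooth deriv_est _ _ T Em Es Eeta u]) (use eta in auto)
    define R where "R = (C * exp (C / Tk) * I) powr \<theta> * M powr (1 - \<theta>)"
    have R0: "R \<ge> 0" by (simp add: R_def)
    have R2: "R\<^sup>2 = C powr (2 * \<theta>) * exp (2 * \<theta> * C / Tk) * I powr (2 * \<theta>) * M powr (2 * (1 - \<theta>))"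
    proof -
      have "R\<^sup>2 = ((C * exp (C / Tk) * I) powr \<theta>)\<^sup>2 * (M powr (1 - \<theta>))\<^sup>2" by (simp add: R_def power_mult_distrib)
      also have "\<dots> = (C * exp (C / Tk) * I) powr (2 * \<theta>) * M powr (2 * (1 - \<theta>))" by (simp add: powr_sq)
      also have "(C * exp (C / Tk) * I) powr (2 * \<theta>) = C powr (2 * \<theta>) * exp (C / Tk) powr (2 * \<theta>) * I powr (2 * \<theta>)"
        using C1 I0 by (simp add: powr_mult)
      also have "exp (C / Tk) powr (2 * \<theta>) = exp (2 * \<theta> * C / Tk)" by (simp add: exp_powr_real mult_ac)
      finally show ?thesis .
    qed
    have "(norm (S t2 u0))\<^sup>2 \<le> R\<^sup>2"
    proof -
      have e: "exp (Q / Tk) \<le> exp (2 * \<theta> * C / Tk)" using CQ Tk0 by (simp add: divide_right_mono)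
      have "P * exp (Q / Tk) \<le> C powr (2 * \<theta>) * exp (2 * \<theta> * C / Tk)"
        by (rule mult_mono[OF CP e]) auto
      hence "P * exp (Q / Tk) * (I powr (2 * \<theta>) * M powr (2 * (1 - \<theta>)))
          \<le> C powr (2 * \<theta>) * exp (2 * \<theta> * C / Tk) * (I powr (2 * \<theta>) * M powr (2 * (1 - \<theta>)))"
        by (rule mult_right_mono) simp
      thus ?thesis using sq R2 by (simp add: mult_ac)
    qed
    hence "norm (S t2 u0) \<le> R" using R0 by (rule power2_le_imp_le)
    thus "norm (S t2 u0) \<le> (C * exp (C / (t2 - t1) powr k) * (LINT t:E|lebesgue. norm (B (S t u0)))) powr \<theta>
                    * norm (S t1 u0) powr (1 - \<theta>)"
      by (simp add: R_def Tk_def I_def M_def)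
  qed
  show "\<exists>C>0. \<exists>\<theta>. 0 < \<theta> \<and> \<theta> < 1 \<and> (\<forall>t1 t2 E u0. 0 \<le> t1 \<longrightarrow> t1 < t2 \<longrightarrow> t2 - t1 \<le> 1 \<longrightarrow>
                E \<in> sets lebesgue \<longrightarrow> E \<subseteq> {t1..t2} \<longrightarrow> measure lebesgue E > 0 \<longrightarrow>
                measure lebesgue (E \<inter> {t1<..<t2}) \<ge> \<eta> * (t2 - t1) \<longrightarrow>
                u0 \<in> gen_dom S \<longrightarrow>
                norm (S t2 u0)
                  \<le> (C * exp (C / (t2 - t1) powr k) * (LINT t:E|lebesgue. norm (B (S t u0)))) powr \<theta>
                    * norm (S t1 u0) powr (1 - \<theta>))"
    using C1 th main by (intro exI[of _ C] conjI exI[of _ \<theta>]) auto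
qed


end
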